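(* Let $(W,S)$ be a Coxeter system with $S$ finite. Let $t_1,\dots,t_m\in S$ with $m(t_{i-1},t_i)=\infty$ for $2\le i\le m$. Set $J=S\setminus\{t_1,\dots,t_m\}$ and $\tilde W_i = W_{J\cup\{t_i\}}\setminus W_J$ (set difference). If $w\in\tilde W_1\tilde W_2\cdots\tilde W_m$, then every reduced decomposition of $w$ is of the form $\tilde w_1\cdots\tilde w_m$, i.e. it is a concatenation of $m$ subwords such that the $i$-th subword represents an element of $\tilde W_i$. In particular $\ell(w)\ge m$.
   Context: $m(s,t)$ denotes the order of $st$ in $W$ (possibly $\infty$); for $J\subseteq S$, $W_J=\langle J\rangle$; $\ell$ is the word length with respect to $S$; a reduced decomposition of $w$ is a word in $S$ of length $\ell(w)$ representing $w$. *)

theory Defs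
  imports "HOL-Algebra.Algebra"
begin

text \<open>Coxeter systems, stated via HOL-Algebra groups.  The order m(s,t) of st is
  group.ord G (s * t), which is 0 exactly when st has infinite order (m = infinity).\<close>

definition coxeter_m :: "('a, 'b) monoid_scheme \<Rightarrow> 'a \<Rightarrow> 'a \<Rightarrow> nat" where
  "coxeter_m G s t = group.ord G (s \<otimes>\<^bsub>G\<^esub> t)"

text \<open>The test groups H are taken
  with carrier in nat; this suffices when S is finite (the presented group is countable).\<close>

definition coxeter_system :: "('a, 'b) monoid_scheme \<Rightarrow> 'a set \<Rightarrow> bool" where
  "coxeter_system G S \<longleftrightarrow>
     group G \<and> S \<subseteq> carrier G \<and> generate G S = carrier G \<and>
     (\<forall>s\<in>S. s \<noteq> \<one>\<^bsub>G\<^esub> \<and> s \<otimes>\<^bsub>G\<^esub> s = \<one>\<^bsub>G\<^esub>) \<and>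
     (\<forall>(H :: nat monoid) f. group H \<and> f \<in> S \<rightarrow> carrier H \<and>
        (\<forall>s\<in>S. f s \<otimes>\<^bsub>H\<^esub> f s = \<one>\<^bsub>H\<^esub>) \<and>
        (\<forall>s\<in>S. \<forall>t\<in>S. coxeter_m G s t \<noteq> 0 \<longrightarrow>
            (f s \<otimes>\<^bsub>H\<^esub> f t) [^]\<^bsub>H\<^esub> coxeter_m G s t = \<one>\<^bsub>H\<^esub>)
      \<longrightarrow> (\<exists>h \<in> hom G H. \<forall>s\<in>S. h s = f s))"

definition word_prod :: "('a, 'b) monoid_scheme \<Rightarrow> 'a list \<Rightarrow> 'a" where
  "word_prod G ws = foldr (\<lambda>x y. x \<otimes>\<^bsub>G\<^esub> y) ws \<one>\<^bsub>G\<^esub>"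

definition word_length :: "('a, 'b) monoid_scheme \<Rightarrow> 'a set \<Rightarrow> 'a \<Rightarrow> nat" where
  "word_length G S w = (LEAST n. \<exists>ws. length ws = n \<and> set ws \<subseteq> S \<and> word_prod G ws = w)"

definition reduced_decomposition :: "('a, 'b) monoid_scheme \<Rightarrow> 'a set \<Rightarrow> 'a \<Rightarrow> 'a list \<Rightarrow> bool" where
  "reduced_decomposition G S w ws \<longleftrightarrow>
     set ws \<subseteq> S \<and> word_prod G ws = w \<and> length ws = word_length G S w"

definition parabolic :: "('a, 'b) monoid_scheme \<Rightarrow> 'a set \<Rightarrow> 'a set" where
  "parabolic G J = generate G J"

end

theory Submission
  imports Defs "HOL-Library.Countable_Set"
begin

section \<open>Transfer of a countable group to a group on nat\<close>

definition nat_copy :: "('c,'d) monoid_scheme \<Rightarrow> nat monoid" where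
 "nat_copy H = \<lparr>carrier = to_nat_on (carrier H) ` carrier H,
    monoid.mult = (\<lambda>a b. to_nat_on (carrier H) (from_nat_into (carrier H) a \<otimes>\<^bsub>H\<^esub> from_nat_into (carrier H) b)),
    one = to_nat_on (carrier H) \<one>\<^bsub>H\<^esub>\<rparr>"

lemma nat_copy_group:
  assumes H: "group H" and c: "countable (carrier H)"
  shows "group (nat_copy H)"
proof -
  interpret H: group H by fact
  let ?e = "to_nat_on (carrier H)" and ?d = "from_nat_into (carrier H)"
  have de: "\<And>x. x \<in> carrier H \<Longrightarrow> ?d (?e x) = x" using c by simp
  show ?thesis
  proof (rule groupI)
    fix x y assume "x \<in> carrier (nat_copy H)" "y \<in> carrier (nat_copy H)"
    then show "x \<otimes>\<^bsub>nat_copy H\<^esub> y \<in> carrier (nat_copy H)"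
      by (auto simp: nat_copy_def de)
  next
    show "\<one>\<^bsub>nat_copy H\<^esub> \<in> carrier (nat_copy H)" by (auto simp: nat_copy_def)
  next
    fix x y z assume "x \<in> carrier (nat_copy H)" "y \<in> carrier (nat_copy H)" "z \<in> carrier (nat_copy H)"
    then show "x \<otimes>\<^bsub>nat_copy H\<^esub> y \<otimes>\<^bsub>nat_copy H\<^esub> z = x \<otimes>\<^bsub>nat_copy H\<^esub> (y \<otimes>\<^bsub>nat_copy H\<^esub> z)"
      by (auto simp: nat_copy_def de H.m_assoc)
  next
    fix x assume "x \<in> carrier (nat_copy H)"
    then show "\<one>\<^bsub>nat_copy H\<^esub> \<otimes>\<^bsub>nat_copy H\<^esub> x = x"
      by (auto simp: nat_copy_def de)
  next
    fix x assume "x \<in> carrier (nat_copy H)"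
    then obtain a where a: "a \<in> carrier H" "x = ?e a" by (auto simp: nat_copy_def)
    show "\<exists>y\<in>carrier (nat_copy H). y \<otimes>\<^bsub>nat_copy H\<^esub> x = \<one>\<^bsub>nat_copy H\<^esub>"
      by (rule bexI[of _ "?e (inv\<^bsub>H\<^esub> a)"]) (auto simp: nat_copy_def de a)
  qed
qed

lemma nat_copy_enc_hom:
  assumes "group H" "countable (carrier H)"
  shows "to_nat_on (carrier H) \<in> hom H (nat_copy H)"
proof -
  interpret H: group H by fact
  show ?thesis using assms(2) by (auto simp: hom_def nat_copy_def)
qed

lemma nat_copy_dec_hom:
  assumes "group H" "countable (carrier H)"
  shows "from_nat_into (carrier H) \<in> hom (nat_copy H) H"
proof -
  interpret H: group H by fact
  show ?thesis using assms(2) by (auto simp: hom_def nat_copy_def)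
qed

section \<open>Reflection lists and the test group\<close>

primrec rl :: "('a,'b) monoid_scheme \<Rightarrow> 'a list \<Rightarrow> 'a list" where
  "rl G [] = []"
| "rl G (x # xs) = (inv\<^bsub>G\<^esub> (word_prod G xs) \<otimes>\<^bsub>G\<^esub> x \<otimes>\<^bsub>G\<^esub> word_prod G xs) # rl G xs"

definition oddset :: "('a,'b) monoid_scheme \<Rightarrow> 'a list \<Rightarrow> 'a set" where
  "oddset G ws = {r. odd (count_list (rl G ws) r)}"

definition HR :: "('a,'b) monoid_scheme \<Rightarrow> ('a \<times> 'a set) monoid" where
  "HR G = \<lparr>carrier = {(g,A). g \<in> carrier G \<and> A \<subseteq> carrier G \<and> finite A},
     monoid.mult = (\<lambda>x y. (fst x \<otimes>\<^bsub>G\<^esub> fst y, {r \<in> carrier G. (r \<in> snd y) \<noteq> (fst y \<otimes>\<^bsub>G\<^esub> r \<otimes>\<^bsub>G\<^esub> inv\<^bsub>G\<^esub> (fst y) \<in> snd x)})),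
     one = (\<one>\<^bsub>G\<^esub>, {})\<rparr>"

lemma (in group) HR_mult: "x \<otimes>\<^bsub>HR G\<^esub> y = (fst x \<otimes> fst y, {r \<in> carrier G. (r \<in> snd y) \<noteq> (fst y \<otimes> r \<otimes> inv (fst y) \<in> snd x)})"
  by (simp add: HR_def)

lemma (in group) HR_one: "\<one>\<^bsub>HR G\<^esub> = (\<one>, {})" by (simp add: HR_def)
lemma (in group) HR_carrier: "carrier (HR G) = {(g,A). g \<in> carrier G \<and> A \<subseteq> carrier G \<and> finite A}"
  by (simp add: HR_def)

lemma (in group) HR_group: "group (HR G)"
proof (rule groupI)
  fix x y assume x: "x \<in> carrier (HR G)" and y: "y \<in> carrier (HR G)"
  obtain g A where gA: "x = (g,A)" by fastforce
  obtain h B where hB: "y = (h,B)" by fastforce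
  have g: "g \<in> carrier G" "A \<subseteq> carrier G" "finite A" using x gA by (auto simp: HR_carrier)
  have h: "h \<in> carrier G" "B \<subseteq> carrier G" "finite B" using y hB by (auto simp: HR_carrier)
  have "{r \<in> carrier G. (r \<in> B) \<noteq> (h \<otimes> r \<otimes> inv h \<in> A)} \<subseteq> B \<union> (\<lambda>a. inv h \<otimes> a \<otimes> h) ` A"
  proof
    fix r assume r: "r \<in> {r \<in> carrier G. (r \<in> B) \<noteq> (h \<otimes> r \<otimes> inv h \<in> A)}"
    show "r \<in> B \<union> (\<lambda>a. inv h \<otimes> a \<otimes> h) ` A"
    proof (cases "r \<in> B")
      case False
      then have "h \<otimes> r \<otimes> inv h \<in> A" using r by auto
      moreover have "r = inv h \<otimes> (h \<otimes> r \<otimes> inv h) \<otimes> h" using r h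
        by (simp add: m_assoc flip: m_assoc[of "inv h"])
      ultimately show ?thesis by blast
    qed auto
  qed
  then have "finite {r \<in> carrier G. (r \<in> B) \<noteq> (h \<otimes> r \<otimes> inv h \<in> A)}"
    using g h by (meson finite_UnI finite_imageI finite_subset)
  then show "x \<otimes>\<^bsub>HR G\<^esub> y \<in> carrier (HR G)"
    using g h by (auto simp: HR_mult HR_carrier gA hB)
next
  show "\<one>\<^bsub>HR G\<^esub> \<in> carrier (HR G)" by (simp add: HR_one HR_carrier)
next
  fix x y z assume x: "x \<in> carrier (HR G)" and y: "y \<in> carrier (HR G)" and z: "z \<in> carrier (HR G)"
  obtain g A where gA: "x = (g,A)" by fastforce
  obtain h B where hB: "y = (h,B)" by fastforce
  obtain k C where kC: "z = (k,C)" by fastforce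
  have g: "g \<in> carrier G" "A \<subseteq> carrier G" using x gA by (auto simp: HR_carrier)
  have h: "h \<in> carrier G" "B \<subseteq> carrier G" using y hB by (auto simp: HR_carrier)
  have k: "k \<in> carrier G" "C \<subseteq> carrier G" using z kC by (auto simp: HR_carrier)
  have e: "\<And>r. r \<in> carrier G \<Longrightarrow> h \<otimes> k \<otimes> r \<otimes> inv (h \<otimes> k) = h \<otimes> (k \<otimes> r \<otimes> inv k) \<otimes> inv h"
    using h k by (simp add: inv_mult_group m_assoc)
  show "x \<otimes>\<^bsub>HR G\<^esub> y \<otimes>\<^bsub>HR G\<^esub> z = x \<otimes>\<^bsub>HR G\<^esub> (y \<otimes>\<^bsub>HR G\<^esub> z)"
    using g h k by (auto simp: HR_mult gA hB kC m_assoc inv_mult_group)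
next
  fix x assume x: "x \<in> carrier (HR G)"
  then show "\<one>\<^bsub>HR G\<^esub> \<otimes>\<^bsub>HR G\<^esub> x = x"
    by (auto simp: HR_mult HR_one HR_carrier)
next
  fix x assume x: "x \<in> carrier (HR G)"
  obtain g A where gA: "x = (g,A)" by fastforce
  have g: "g \<in> carrier G" "A \<subseteq> carrier G" "finite A" using x gA by (auto simp: HR_carrier)
  let ?Y = "(\<lambda>r. g \<otimes> r \<otimes> inv g) ` A"
  have Y: "?Y \<subseteq> carrier G" "finite ?Y" using g by auto
  have "{r \<in> carrier G. (r \<in> A) \<noteq> (g \<otimes> r \<otimes> inv g \<in> ?Y)} = {}"
  proof -
    have "\<And>r a. r \<in> carrier G \<Longrightarrow> a \<in> carrier G \<Longrightarrow> g \<otimes> r \<otimes> inv g = g \<otimes> a \<otimes> inv g \<Longrightarrow> r = a"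
      using g by (metis inv_closed m_closed l_cancel r_cancel)
    then show ?thesis using g by blast
  qed
  then have "(inv g, ?Y) \<otimes>\<^bsub>HR G\<^esub> x = \<one>\<^bsub>HR G\<^esub>"
    using g by (simp add: HR_mult HR_one gA)
  moreover have "(inv g, ?Y) \<in> carrier (HR G)" using g Y by (simp add: HR_carrier)
  ultimately show "\<exists>y\<in>carrier (HR G). y \<otimes>\<^bsub>HR G\<^esub> x = \<one>\<^bsub>HR G\<^esub>" by blast
qed


locale cox = group G for G :: "('a,'b) monoid_scheme" (structure) +
  fixes S :: "'a set"
  assumes cs: "coxeter_system G S" and finS: "finite S"
begin

lemma S_sub: "S \<subseteq> carrier G" using cs by (simp add: coxeter_system_def)
lemma gen_S: "generate G S = carrier G" using cs by (simp add: coxeter_system_def)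
lemma S_sq: "s \<in> S \<Longrightarrow> s \<otimes> s = \<one>" using cs by (simp add: coxeter_system_def)
lemma S_ne1: "s \<in> S \<Longrightarrow> s \<noteq> \<one>" using cs by (simp add: coxeter_system_def)
lemma S_c: "s \<in> S \<Longrightarrow> s \<in> carrier G" using S_sub by blast
lemma S_inv: "s \<in> S \<Longrightarrow> inv s = s"
  using S_sq S_c by (metis inv_equality)

lemma wp_Nil[simp]: "word_prod G [] = \<one>" by (simp add: word_prod_def)
lemma wp_Cons[simp]: "word_prod G (x # xs) = x \<otimes> word_prod G xs" by (simp add: word_prod_def)
lemma wp_closed[intro, simp]: "set xs \<subseteq> carrier G \<Longrightarrow> word_prod G xs \<in> carrier G"
  by (induction xs) auto
lemma wp_closedS[intro, simp]: "set xs \<subseteq> S \<Longrightarrow> word_prod G xs \<in> carrier G"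
  using S_sub by auto
lemma wp_append: "set xs \<subseteq> carrier G \<Longrightarrow> set ys \<subseteq> carrier G \<Longrightarrow>
   word_prod G (xs @ ys) = word_prod G xs \<otimes> word_prod G ys"
  by (induction xs) (auto simp: m_assoc)
lemma wp_appendS: "set xs \<subseteq> S \<Longrightarrow> set ys \<subseteq> S \<Longrightarrow>
   word_prod G (xs @ ys) = word_prod G xs \<otimes> word_prod G ys"
  using wp_append S_sub by auto
lemma wp_snoc: "set xs \<subseteq> S \<Longrightarrow> s \<in> S \<Longrightarrow> word_prod G (xs @ [s]) = word_prod G xs \<otimes> s"
  using wp_appendS[of xs "[s]"] S_c by simp
lemma wp_rev: "set xs \<subseteq> S \<Longrightarrow> inv (word_prod G xs) = word_prod G (rev xs)"
proof (induction xs)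
  case (Cons x xs)
  then show ?case using S_inv[of x] S_c[of x]
    by (simp add: inv_mult_group wp_snoc)
qed simp

lemma generate_words: "J \<subseteq> S \<Longrightarrow> generate G J = {word_prod G ws | ws. set ws \<subseteq> J}"
proof
  assume J: "J \<subseteq> S"
  show "generate G J \<subseteq> {word_prod G ws | ws. set ws \<subseteq> J}"
  proof
    fix x assume "x \<in> generate G J"
    then show "x \<in> {word_prod G ws | ws. set ws \<subseteq> J}"
    proof induction
      case one then show ?case by (auto intro!: exI[of _ "[]"])
    next
      case (incl h) then show ?case using J S_c by (auto intro!: exI[of _ "[h]"])
    next
      case (inv h) then show ?case using J S_c S_inv by (auto intro!: exI[of _ "[h]"])
    next
      case (eng h1 h2)
      then obtain w1 w2 where "set w1 \<subseteq> J" "h1 = word_prod G w1" "set w2 \<subseteq> J" "h2 = word_prod G w2" by auto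
      then show ?case using J by (auto intro!: exI[of _ "w1 @ w2"] simp: wp_appendS)
    qed
  qed
  show "{word_prod G ws | ws. set ws \<subseteq> J} \<subseteq> generate G J"
  proof clarify
    fix ws assume "set ws \<subseteq> J"
    then show "word_prod G ws \<in> generate G J"
      by (induction ws) (auto intro: generate.intros)
  qed
qed

lemma carrier_words: "carrier G = {word_prod G ws | ws. set ws \<subseteq> S}"
  using generate_words[of S] gen_S by simp

lemma countable_carrier: "countable (carrier G)"
proof -
  have "carrier G = word_prod G ` lists S" using carrier_words by (auto simp: lists_eq_set)
  then show ?thesis using finS by (simp add: countable_finite)
qed

lemma rl_closed: "set xs \<subseteq> carrier G \<Longrightarrow> set (rl G xs) \<subseteq> carrier G"
  by (induction xs) auto

lemma length_rl[simp]: "length (rl G xs) = length xs"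
  by (induction xs) auto

definition sig :: "'a \<Rightarrow> 'a \<times> 'a set" where "sig s = (s, {s})"

lemma sig_carrier: "s \<in> S \<Longrightarrow> sig s \<in> carrier (HR G)"
  using S_c by (simp add: sig_def HR_carrier)

lemma HR_wp: "set ws \<subseteq> S \<Longrightarrow> word_prod (HR G) (map sig ws) = (word_prod G ws, oddset G ws)"
proof (induction ws)
  case Nil
  then show ?case by (simp add: word_prod_def HR_one oddset_def)
next
  case (Cons x xs)
  let ?W = "word_prod G xs"
  have x: "x \<in> carrier G" using Cons S_c by auto
  have W: "?W \<in> carrier G" using Cons by auto
  have IH: "word_prod (HR G) (map sig xs) = (?W, oddset G xs)" using Cons by auto
  have rc: "set (rl G xs) \<subseteq> carrier G" using Cons S_sub by (intro rl_closed) auto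
  have eq: "\<And>r. r \<in> carrier G \<Longrightarrow> (inv ?W \<otimes> x \<otimes> ?W = r) = (?W \<otimes> r \<otimes> inv ?W = x)"
  proof -
    fix r assume r: "r \<in> carrier G"
    show "(inv ?W \<otimes> x \<otimes> ?W = r) = (?W \<otimes> r \<otimes> inv ?W = x)"
    proof
      assume "inv ?W \<otimes> x \<otimes> ?W = r"
      then show "?W \<otimes> r \<otimes> inv ?W = x" using x W by (auto simp: m_assoc simp flip: m_assoc[of ?W "inv ?W"])
    next
      assume "?W \<otimes> r \<otimes> inv ?W = x"
      then show "inv ?W \<otimes> x \<otimes> ?W = r" using r W by (auto simp: m_assoc simp flip: m_assoc[of "inv ?W" ?W])
    qed
  qed
  have "oddset G (x # xs) = {r \<in> carrier G. (r \<in> oddset G xs) \<noteq> (?W \<otimes> r \<otimes> inv ?W \<in> {x})}"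
  proof (rule Set.set_eqI)
    fix r
    show "r \<in> oddset G (x # xs) \<longleftrightarrow> r \<in> {r \<in> carrier G. (r \<in> oddset G xs) \<noteq> (?W \<otimes> r \<otimes> inv ?W \<in> {x})}"
    proof (cases "r \<in> carrier G")
      case True
      then show ?thesis using eq[OF True] by (auto simp: oddset_def)
    next
      case False
      then have "r \<notin> set (rl G (x # xs))" using rc x W by auto
      then show ?thesis using False by (auto simp: oddset_def count_list_0_iff)
    qed
  qed
  note E = this
  have B: "word_prod (HR G) (map sig (x # xs)) = sig x \<otimes>\<^bsub>HR G\<^esub> word_prod (HR G) (map sig xs)"
    by (simp add: word_prod_def)
  have A: "sig x \<otimes>\<^bsub>HR G\<^esub> (?W, oddset G xs) = (x \<otimes> ?W, {r \<in> carrier G. (r \<in> oddset G xs) \<noteq> (?W \<otimes> r \<otimes> inv ?W \<in> {x})})"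
    by (simp add: HR_mult sig_def)
  show ?case unfolding B IH A E by simp
qed


lemma HR_grp: "group (HR G)" by (rule HR_group)

lemma sig_sq: assumes s: "s \<in> S" shows "sig s \<otimes>\<^bsub>HR G\<^esub> sig s = \<one>\<^bsub>HR G\<^esub>"
proof -
  have sc: "s \<in> carrier G" using s S_c by auto
  have "\<And>r. r \<in> carrier G \<Longrightarrow> (s \<otimes> r \<otimes> inv s = s) = (r = s)"
  proof -
    fix r assume r: "r \<in> carrier G"
    have "s \<otimes> r \<otimes> inv s = s \<longleftrightarrow> s \<otimes> r \<otimes> inv s \<otimes> s = s \<otimes> s" using sc r by (metis inv_closed m_closed r_cancel)
    also have "\<dots> \<longleftrightarrow> s \<otimes> r = s \<otimes> s" using sc r by (simp add: m_assoc)
    also have "\<dots> \<longleftrightarrow> r = s" using sc r by (metis l_cancel)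
    finally show "(s \<otimes> r \<otimes> inv s = s) = (r = s)" .
  qed
  then show ?thesis using S_sq[OF s] sc by (auto simp: HR_mult HR_one sig_def)
qed

abbreviation W2 :: "'a \<Rightarrow> 'a \<Rightarrow> nat \<Rightarrow> 'a list" where
  "W2 s t k \<equiv> concat (replicate k [s,t])"

lemma W2_set: "s \<in> S \<Longrightarrow> t \<in> S \<Longrightarrow> set (W2 s t k) \<subseteq> S"
  by (induction k) auto

lemma W2_wp: assumes "s \<in> S" "t \<in> S" shows "word_prod G (W2 s t k) = (s \<otimes> t) [^] k"
proof (induction k)
  case (Suc k)
  have "word_prod G (W2 s t (Suc k)) = s \<otimes> (t \<otimes> word_prod G (W2 s t k))"
    by simp
  also have "\<dots> = (s \<otimes> t) \<otimes> (s \<otimes> t) [^] k" using Suc assms S_c by (simp add: m_assoc)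
  also have "\<dots> = (s \<otimes> t) [^] Suc k" using assms S_c by (metis m_closed nat_pow_Suc2)
  finally show ?case .
qed simp

lemma HR_pow: assumes "s \<in> S" "t \<in> S"
  shows "(sig s \<otimes>\<^bsub>HR G\<^esub> sig t) [^]\<^bsub>HR G\<^esub> k = word_prod (HR G) (map sig (W2 s t k))"
proof (induction k)
  case 0 then show ?case by (simp add: word_prod_def)
next
  case (Suc k)
  interpret H: group "HR G" by (rule HR_group)
  have c: "sig s \<in> carrier (HR G)" "sig t \<in> carrier (HR G)" using assms sig_carrier by auto
  have "(sig s \<otimes>\<^bsub>HR G\<^esub> sig t) [^]\<^bsub>HR G\<^esub> Suc k = (sig s \<otimes>\<^bsub>HR G\<^esub> sig t) \<otimes>\<^bsub>HR G\<^esub> (sig s \<otimes>\<^bsub>HR G\<^esub> sig t) [^]\<^bsub>HR G\<^esub> k"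
    using c by (metis H.m_closed H.nat_pow_Suc2)
  also have "\<dots> = sig s \<otimes>\<^bsub>HR G\<^esub> (sig t \<otimes>\<^bsub>HR G\<^esub> word_prod (HR G) (map sig (W2 s t k)))"
    using c Suc by (simp add: H.m_assoc word_prod_def)
  also have "\<dots> = word_prod (HR G) (map sig (W2 s t (Suc k)))"
    by (simp add: word_prod_def)
  finally show ?case .
qed

lemma tP: fixes k :: nat assumes "s \<in> S" "t \<in> S" shows "t \<otimes> (s \<otimes> t) [^] k = (t \<otimes> s) [^] k \<otimes> t"
proof (induction k)
  case (Suc k)
  have sc: "s \<in> carrier G" "t \<in> carrier G" using assms S_c by auto
  have "t \<otimes> (s \<otimes> t) [^] Suc k = t \<otimes> (s \<otimes> t) [^] k \<otimes> (s \<otimes> t)" using sc by (simp add: m_assoc)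
  also have "\<dots> = (t \<otimes> s) [^] k \<otimes> (t \<otimes> s) \<otimes> t" using Suc sc by (simp add: m_assoc)
  finally show ?case by simp
qed (use assms S_c in simp)

lemma rl_W2: assumes s: "s \<in> S" and t: "t \<in> S"
  shows "rl G (W2 s t k) = map (\<lambda>e. (t \<otimes> s) [^] e \<otimes> t) (rev [0..<2*k])"
proof (induction k)
  case 0 then show ?case by simp
next
  case (Suc k)
  have sc: "s \<in> carrier G" "t \<in> carrier G" using assms S_c by auto
  let ?P = "s \<otimes> t" and ?Q = "t \<otimes> s"
  have Pc: "?P \<in> carrier G" "?Q \<in> carrier G" using sc by auto
  have wk: "word_prod G (W2 s t k) = ?P [^] k" using W2_wp[OF s t] .
  have iP: "inv (?P [^] k) = ?Q [^] k"
    using sc S_inv[OF s] S_inv[OF t] by (simp add: nat_pow_inv[symmetric] inv_mult_group)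
  have e1: "inv (?P [^] k) \<otimes> t \<otimes> ?P [^] k = ?Q [^] (2*k) \<otimes> t"
  proof -
    have "inv (?P [^] k) \<otimes> t \<otimes> ?P [^] k = ?Q [^] k \<otimes> (t \<otimes> ?P [^] k)" using iP sc by (simp add: m_assoc)
    also have "\<dots> = ?Q [^] k \<otimes> ?Q [^] k \<otimes> t" using tP[OF s t] sc by (simp add: m_assoc)
    also have "\<dots> = ?Q [^] (k + k) \<otimes> t" using Pc by (simp add: nat_pow_mult)
    also have "\<dots> = ?Q [^] (2*k) \<otimes> t" by (simp add: mult_2)
    finally show ?thesis .
  qed
  have e2: "inv (t \<otimes> ?P [^] k) \<otimes> s \<otimes> (t \<otimes> ?P [^] k) = ?Q [^] (Suc (2*k)) \<otimes> t"
  proof -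
    have "inv (t \<otimes> ?P [^] k) \<otimes> s \<otimes> (t \<otimes> ?P [^] k) = ?Q [^] k \<otimes> ?Q \<otimes> (t \<otimes> ?P [^] k)"
      using iP sc S_inv[OF t] by (simp add: inv_mult_group m_assoc)
    also have "\<dots> = ?Q [^] k \<otimes> ?Q \<otimes> ?Q [^] k \<otimes> t" using tP[OF s t] sc by (simp add: m_assoc)
    also have "\<dots> = ?Q [^] (Suc (2*k)) \<otimes> t"
    proof -
      have "?Q [^] (Suc (2*k)) = ?Q [^] (Suc k) \<otimes> ?Q [^] k"
        by (subst nat_pow_mult) (use Pc in \<open>simp_all add: mult_2\<close>)
      then show ?thesis by simp
    qed
    finally show ?thesis .
  qed
  have "rl G (W2 s t (Suc k)) = (inv (t \<otimes> ?P [^] k) \<otimes> s \<otimes> (t \<otimes> ?P [^] k)) # (inv (?P [^] k) \<otimes> t \<otimes> ?P [^] k) # rl G (W2 s t k)"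
    using wk by simp
  also have "\<dots> = map (\<lambda>e. ?Q [^] e \<otimes> t) (rev [0..<2*Suc k])"
    using Suc e1 e2 by simp
  finally show ?case .
qed

lemma oddset_W2: assumes s: "s \<in> S" and t: "t \<in> S" and m: "(s \<otimes> t) [^] (m::nat) = \<one>"
  shows "oddset G (W2 s t m) = {}"
proof -
  have sc: "s \<in> carrier G" "t \<in> carrier G" using assms S_c by auto
  let ?Q = "t \<otimes> s"
  have iP: "inv (s \<otimes> t) = ?Q" using sc S_inv[OF s] S_inv[OF t] by (simp add: inv_mult_group)
  have "?Q [^] m = inv ((s \<otimes> t) [^] m)"
    using nat_pow_inv[of "s \<otimes> t" m] sc iP by simp
  then have Qm: "?Q [^] m = \<one>" using m by simp
  define f where "f = (\<lambda>e::nat. ?Q [^] e \<otimes> t)"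
  have fp: "f (e + m) = f e" for e
  proof -
    have "?Q [^] (e+m) = ?Q [^] e \<otimes> ?Q [^] m" by (rule nat_pow_mult[symmetric]) (use sc in simp)
    then show ?thesis using Qm sc by (simp add: f_def)
  qed
  have r: "rl G (W2 s t m) = map f (rev [0..<2*m])" using rl_W2[OF s t, of m] by (simp add: f_def)
  have sp: "[0..<2*m] = [0..<m] @ [m..<m+m]" using upt_add_eq_append[of 0 m m] by (simp add: mult_2)
  have mm: "map f [m..<m+m] = map f [0..<m]"
  proof -
    have "[m..<m+m] = map (\<lambda>i. i + m) [0..<m]" by (simp add: map_add_upt)
    then show ?thesis using fp by simp
  qed
  have "count_list (rl G (W2 s t m)) r = 2 * count_list (map f [0..<m]) r" for r
  proof -
    have "count_list (rl G (W2 s t m)) r = count_list (map f [0..<2*m]) r"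
      unfolding r by (simp only: rev_map[symmetric] count_list_rev)
    also have "\<dots> = count_list (map f [0..<m]) r + count_list (map f [m..<m+m]) r"
      unfolding sp by simp
    finally show ?thesis unfolding mm by simp
  qed
  then show ?thesis by (simp add: oddset_def)
qed

definition enc where "enc = to_nat_on (carrier (HR G))"
definition dec where "dec = from_nat_into (carrier (HR G))"

lemma countable_HR: "countable (carrier (HR G))"
proof -
  have "carrier (HR G) \<subseteq> carrier G \<times> {A. finite A \<and> A \<subseteq> carrier G}"
    by (auto simp: HR_carrier)
  moreover have "countable (carrier G \<times> {A. finite A \<and> A \<subseteq> carrier G})"
    using countable_carrier by (simp add: countable_Collect_finite_subset)
  ultimately show ?thesis by (rule countable_subset)
qed

lemma oddset_wd:
  assumes "set ws \<subseteq> S" "set ws' \<subseteq> S" "word_prod G ws = word_prod G ws'"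
  shows "oddset G ws = oddset G ws'"
proof -
  let ?H = "nat_copy (HR G)"
  have gH: "group ?H" by (rule nat_copy_group[OF HR_group countable_HR])
  interpret H: group ?H by (rule gH)
  interpret R: group "HR G" by (rule HR_group)
  have ench: "enc \<in> hom (HR G) ?H" unfolding enc_def by (rule nat_copy_enc_hom[OF HR_group countable_HR])
  have dech: "dec \<in> hom ?H (HR G)" unfolding dec_def by (rule nat_copy_dec_hom[OF HR_group countable_HR])
  have de: "\<And>x. x \<in> carrier (HR G) \<Longrightarrow> dec (enc x) = x" using countable_HR by (simp add: enc_def dec_def)
  let ?f = "\<lambda>s. enc (sig s)"
  have fc: "?f \<in> S \<rightarrow> carrier ?H" using ench sig_carrier by (auto simp: hom_def)
  have f2: "\<forall>s\<in>S. ?f s \<otimes>\<^bsub>?H\<^esub> ?f s = \<one>\<^bsub>?H\<^esub>"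
  proof
    fix s assume s: "s \<in> S"
    have "?f s \<otimes>\<^bsub>?H\<^esub> ?f s = enc (sig s \<otimes>\<^bsub>HR G\<^esub> sig s)"
      using ench sig_carrier[OF s] by (simp add: hom_mult)
    also have "\<dots> = \<one>\<^bsub>?H\<^esub>" using sig_sq[OF s] ench by (simp add: Group.hom_one[OF ench HR_group gH]) 
    finally show "?f s \<otimes>\<^bsub>?H\<^esub> ?f s = \<one>\<^bsub>?H\<^esub>" .
  qed
  have f3: "\<forall>s\<in>S. \<forall>t\<in>S. coxeter_m G s t \<noteq> 0 \<longrightarrow> (?f s \<otimes>\<^bsub>?H\<^esub> ?f t) [^]\<^bsub>?H\<^esub> coxeter_m G s t = \<one>\<^bsub>?H\<^esub>"
  proof (intro ballI impI)
    fix s t assume s: "s \<in> S" and t: "t \<in> S" and "coxeter_m G s t \<noteq> 0"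
    let ?m = "coxeter_m G s t"
    have stc: "s \<otimes> t \<in> carrier G" using s t S_c by auto
    have pm: "(s \<otimes> t) [^] ?m = \<one>" using stc by (simp add: coxeter_m_def)
    have "(sig s \<otimes>\<^bsub>HR G\<^esub> sig t) [^]\<^bsub>HR G\<^esub> ?m = \<one>\<^bsub>HR G\<^esub>"
      using HR_pow[OF s t] HR_wp[OF W2_set[OF s t]] W2_wp[OF s t] pm oddset_W2[OF s t pm]
      by (simp add: HR_one)
    moreover have "?f s \<otimes>\<^bsub>?H\<^esub> ?f t = enc (sig s \<otimes>\<^bsub>HR G\<^esub> sig t)"
      using ench sig_carrier[OF s] sig_carrier[OF t] by (simp add: hom_mult)
    ultimately show "(?f s \<otimes>\<^bsub>?H\<^esub> ?f t) [^]\<^bsub>?H\<^esub> ?m = \<one>\<^bsub>?H\<^esub>"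
      using hom_nat_pow[OF ench _ HR_group gH] sig_carrier[OF s] sig_carrier[OF t]
        Group.hom_one[OF ench HR_group gH]
      by (metis R.m_closed)
  qed
  obtain h where h: "h \<in> hom G ?H" and hs: "\<forall>s\<in>S. h s = ?f s"
    using cs gH fc f2 f3 unfolding coxeter_system_def by blast
  have key: "\<And>xs. set xs \<subseteq> S \<Longrightarrow> dec (h (word_prod G xs)) = (word_prod G xs, oddset G xs)"
  proof -
    fix xs :: "'a list" assume xs: "set xs \<subseteq> S"
    then have "dec (h (word_prod G xs)) = word_prod (HR G) (map sig xs)"
    proof (induction xs)
      case Nil
      then show ?case using Group.hom_one[OF h is_group gH]
        Group.hom_one[OF dech gH HR_group] by (simp add: word_prod_def)
    next
      case (Cons x xs)
      have x: "x \<in> S" using Cons by auto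
      have "dec (h (word_prod G (x # xs))) = dec (h x \<otimes>\<^bsub>?H\<^esub> h (word_prod G xs))"
        using h x S_c Cons by (simp add: hom_mult)
      also have "\<dots> = dec (h x) \<otimes>\<^bsub>HR G\<^esub> dec (h (word_prod G xs))"
        using dech h x S_c Cons by (simp add: hom_mult hom_in_carrier)
      also have "\<dots> = sig x \<otimes>\<^bsub>HR G\<^esub> word_prod (HR G) (map sig xs)"
        using Cons hs x de sig_carrier by simp
      finally show ?case by (simp add: word_prod_def)
    qed
    then show "dec (h (word_prod G xs)) = (word_prod G xs, oddset G xs)" using HR_wp[OF xs] by simp
  qed
  show ?thesis using key[OF assms(1)] key[OF assms(2)] assms(3) by simp
qed
end

context cox begin

abbreviation len where "len w \<equiv> word_length G S w"
abbreviation red where "red w u \<equiv> reduced_decomposition G S w u"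

lemma cancel1: "x \<in> carrier G \<Longrightarrow> z \<in> carrier G \<Longrightarrow> x \<otimes> (inv x \<otimes> z) = z"
  by (simp add: m_assoc[symmetric])
lemma cancel2: "x \<in> carrier G \<Longrightarrow> z \<in> carrier G \<Longrightarrow> inv x \<otimes> (x \<otimes> z) = z"
  by (simp add: m_assoc[symmetric])
lemma cancelS: "y \<in> S \<Longrightarrow> z \<in> carrier G \<Longrightarrow> y \<otimes> (y \<otimes> z) = z"
  using S_sq[of y] S_c[of y] by (simp add: m_assoc[symmetric])
lemma conj_eq: "g \<in> carrier G \<Longrightarrow> h \<in> carrier G \<Longrightarrow> k \<in> carrier G \<Longrightarrow>
   (inv g \<otimes> h \<otimes> g = k) = (h \<otimes> g = g \<otimes> k)"
  by (metis cancel1 inv_closed m_assoc m_closed)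

lemma len_le: "set u \<subseteq> S \<Longrightarrow> len (word_prod G u) \<le> length u"
  unfolding word_length_def by (rule Least_le) auto

lemma red_ex: assumes "w \<in> carrier G" shows "\<exists>u. red w u"
proof -
  obtain v where v: "set v \<subseteq> S" "word_prod G v = w" using carrier_words assms by auto
  let ?P = "\<lambda>n. \<exists>ws. length ws = n \<and> set ws \<subseteq> S \<and> word_prod G ws = w"
  have "?P (length v)" using v by auto
  then have "?P (Least ?P)" by (rule LeastI)
  then show ?thesis unfolding reduced_decomposition_def word_length_def by auto
qed

lemma redD: "red w u \<Longrightarrow> set u \<subseteq> S \<and> word_prod G u = w \<and> length u = len w"
  by (simp add: reduced_decomposition_def)

lemma redI: "set u \<subseteq> S \<Longrightarrow> word_prod G u = w \<Longrightarrow> length u = len w \<Longrightarrow> red w u"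
  by (simp add: reduced_decomposition_def)

lemma red_carrier: "red w u \<Longrightarrow> w \<in> carrier G"
  using redD by (metis wp_closedS)

lemma red_le: "red w u \<Longrightarrow> set v \<subseteq> S \<Longrightarrow> word_prod G v = w \<Longrightarrow> length u \<le> length v"
  using redD len_le by metis

lemma rl_mem: "set xs \<subseteq> carrier G \<Longrightarrow> r \<in> set (rl G xs) \<longleftrightarrow>
   (\<exists>b y c. xs = b @ y # c \<and> r = inv (word_prod G c) \<otimes> y \<otimes> word_prod G c)"
proof (induction xs)
  case Nil then show ?case by simp
next
  case (Cons x xs)
  have "r \<in> set (rl G (x # xs)) \<longleftrightarrow> r = inv (word_prod G xs) \<otimes> x \<otimes> word_prod G xs \<or> r \<in> set (rl G xs)"
    by simp
  also have "\<dots> \<longleftrightarrow> (\<exists>b y c. x # xs = b @ y # c \<and> r = inv (word_prod G c) \<otimes> y \<otimes> word_prod G c)"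
    using Cons
    by (auto simp: Cons_eq_append_conv)
  finally show ?case .
qed

lemma rl_snoc: "set xs \<subseteq> S \<Longrightarrow> s \<in> S \<Longrightarrow> rl G (xs @ [s]) = map (\<lambda>q. s \<otimes> q \<otimes> s) (rl G xs) @ [s]"
proof (induction xs)
  case Nil then show ?case using S_c by simp
next
  case (Cons x xs)
  have W: "word_prod G xs \<in> carrier G" using Cons by auto
  have x: "x \<in> carrier G" using Cons S_c by auto
  have s: "s \<in> carrier G" using Cons S_c by auto
  have "inv (word_prod G (xs @ [s])) \<otimes> x \<otimes> word_prod G (xs @ [s]) = s \<otimes> (inv (word_prod G xs) \<otimes> x \<otimes> word_prod G xs) \<otimes> s"
    using Cons W x s by (simp add: wp_snoc inv_mult_group S_inv m_assoc)
  then show ?case using Cons by simp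
qed

lemma del2:
  assumes S: "set (a @ x # b @ y # c) \<subseteq> S"
    and e: "inv (word_prod G (b @ y # c)) \<otimes> x \<otimes> word_prod G (b @ y # c) = inv (word_prod G c) \<otimes> y \<otimes> word_prod G c"
  shows "word_prod G (a @ b @ c) = word_prod G (a @ x # b @ y # c)"
proof -
  let ?A = "word_prod G a" and ?B = "word_prod G b" and ?C = "word_prod G c"
  have c: "?A \<in> carrier G" "?B \<in> carrier G" "?C \<in> carrier G" "x \<in> carrier G" "y \<in> carrier G" "y \<in> S"
    using S S_c by auto
  have e2: "word_prod G (b @ y # c) = ?B \<otimes> (y \<otimes> ?C)" using S by (simp add: wp_appendS)
  have "x \<otimes> (?B \<otimes> (y \<otimes> ?C)) = (?B \<otimes> (y \<otimes> ?C)) \<otimes> (inv ?C \<otimes> y \<otimes> ?C)"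
    using e[unfolded e2] c by (subst conj_eq[symmetric]) auto
  also have "\<dots> = ?B \<otimes> ?C" using c by (simp add: m_assoc cancel1 cancelS)
  finally have k: "x \<otimes> (?B \<otimes> (y \<otimes> ?C)) = ?B \<otimes> ?C" .
  show ?thesis using S c k by (simp add: wp_appendS)
qed

lemma exch0:
  assumes "set u \<subseteq> S" "s \<in> S" "s \<in> set (rl G u)"
  shows "\<exists>b y c. u = b @ y # c \<and> word_prod G (b @ c) = word_prod G u \<otimes> s"
proof -
  obtain b y c where u: "u = b @ y # c" and s: "s = inv (word_prod G c) \<otimes> y \<otimes> word_prod G c"
    using assms rl_mem[of u s] S_sub by auto
  have c: "word_prod G b \<in> carrier G" "word_prod G c \<in> carrier G" "y \<in> carrier G" "y \<in> S" "s \<in> carrier G"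
    using assms u S_c by auto
  have ys: "y \<otimes> word_prod G c = word_prod G c \<otimes> s" using conj_eq[of "word_prod G c" y s] s c by auto
  have uS: "set b \<subseteq> S" "set c \<subseteq> S" using assms(1) u by auto
  have "word_prod G u = word_prod G b \<otimes> (y \<otimes> word_prod G c)"
    unfolding u using uS c(4) by (simp add: wp_appendS)
  then have "word_prod G u \<otimes> s = word_prod G b \<otimes> (y \<otimes> (word_prod G c \<otimes> s))"
    using c by (simp add: m_assoc)
  also have "\<dots> = word_prod G b \<otimes> (y \<otimes> (y \<otimes> word_prod G c))" by (simp only: ys)
  also have "\<dots> = word_prod G (b @ c)" using c uS by (simp add: cancelS wp_appendS)
  finally have "word_prod G (b @ c) = word_prod G u \<otimes> s" by simp
  then show ?thesis using u by (intro exI[of _ b] exI[of _ y] exI[of _ c]) simp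
qed

lemma distinct_count: "distinct xs \<Longrightarrow> count_list xs r = (if r \<in> set xs then 1 else 0)"
  by (induction xs) auto

lemma oddset_distinct: "distinct (rl G u) \<Longrightarrow> oddset G u = set (rl G u)"
  by (auto simp: oddset_def distinct_count split: if_splits)

lemma nondist:
  "set xs \<subseteq> S \<Longrightarrow> \<not> distinct (rl G xs) \<Longrightarrow> \<exists>a x b y c. xs = a @ x # b @ y # c \<and>
     inv (word_prod G (b @ y # c)) \<otimes> x \<otimes> word_prod G (b @ y # c) = inv (word_prod G c) \<otimes> y \<otimes> word_prod G c"
proof (induction xs)
  case Nil then show ?case by simp
next
  case (Cons x xs)
  show ?case
  proof (cases "distinct (rl G xs)")
    case True
    then have "inv (word_prod G xs) \<otimes> x \<otimes> word_prod G xs \<in> set (rl G xs)" using Cons by simp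
    then obtain b y c where "xs = b @ y # c" "inv (word_prod G xs) \<otimes> x \<otimes> word_prod G xs = inv (word_prod G c) \<otimes> y \<otimes> word_prod G c"
      using rl_mem[of xs] Cons S_sub by auto
    then show ?thesis by (intro exI[of _ "[]"]) auto
  next
    case False
    then obtain a x' b y c where "xs = a @ x' # b @ y # c"
      "inv (word_prod G (b @ y # c)) \<otimes> x' \<otimes> word_prod G (b @ y # c) = inv (word_prod G c) \<otimes> y \<otimes> word_prod G c"
      using Cons by auto
    then show ?thesis by (intro exI[of _ "x # a"]) auto
  qed
qed

lemma red_distinct: assumes "red w u" shows "distinct (rl G u)"
proof (rule ccontr)
  assume "\<not> distinct (rl G u)"
  then obtain a x b y c where u: "u = a @ x # b @ y # c" and
    e: "inv (word_prod G (b @ y # c)) \<otimes> x \<otimes> word_prod G (b @ y # c) = inv (word_prod G c) \<otimes> y \<otimes> word_prod G c"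
    using nondist assms redD by blast
  have S: "set (a @ x # b @ y # c) \<subseteq> S" using assms u redD by blast
  have "word_prod G (a @ b @ c) = w" using del2[OF S e] assms u redD by simp
  then have "length u \<le> length (a @ b @ c)" by (intro red_le[OF assms]) (use S in auto)
  then show False using u by simp
qed

lemma distinct_red: assumes S: "set u \<subseteq> S" and d: "distinct (rl G u)" shows "red (word_prod G u) u"
proof -
  obtain v where v: "red (word_prod G u) v" using red_ex[of "word_prod G u"] S by auto
  have "oddset G u = oddset G v" using oddset_wd S v redD by metis
  then have "set (rl G u) = set (rl G v)" using oddset_distinct d red_distinct[OF v] by simp
  then have "length u = length v"
    using distinct_card[OF d] distinct_card[OF red_distinct[OF v]] by simp
  then show ?thesis using v S by (simp add: reduced_decomposition_def)
qed

lemma deletion: "set u \<subseteq> S \<Longrightarrow> \<exists>v. set v \<subseteq> set u \<and> red (word_prod G u) v"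
proof (induction "length u" arbitrary: u rule: less_induct)
  case less
  show ?case
  proof (cases "distinct (rl G u)")
    case True then show ?thesis using distinct_red less by blast
  next
    case False
    then obtain a x b y c where u: "u = a @ x # b @ y # c" and
      e: "inv (word_prod G (b @ y # c)) \<otimes> x \<otimes> word_prod G (b @ y # c) = inv (word_prod G c) \<otimes> y \<otimes> word_prod G c"
      using nondist less by blast
    have S: "set (a @ x # b @ y # c) \<subseteq> S" using less u by blast
    have "word_prod G (a @ b @ c) = word_prod G u" using del2[OF S e] u by simp
    moreover obtain v where "set v \<subseteq> set (a @ b @ c)" "red (word_prod G (a @ b @ c)) v"
      using less(1)[of "a @ b @ c"] u S by auto
    ultimately show ?thesis using u by auto
  qed
qed

lemma len_mult_le: assumes "w \<in> carrier G" "s \<in> S" shows "len w \<le> len (w \<otimes> s) + 1"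
proof -
  obtain r where r: "red (w \<otimes> s) r" using red_ex[of "w \<otimes> s"] assms S_c by auto
  have rS: "set r \<subseteq> S" "word_prod G r = w \<otimes> s" using r redD by auto
  have "word_prod G (r @ [s]) = w" using rS assms S_c
    by (simp add: wp_snoc m_assoc S_sq)
  then show ?thesis using len_le[of "r @ [s]"] r assms redD by fastforce
qed

lemma desc_in: assumes u: "red w u" and s: "s \<in> S" and i: "s \<in> set (rl G u)"
  shows "len (w \<otimes> s) + 1 = len w"
proof -
  have uS: "set u \<subseteq> S" "length u = len w" "word_prod G u = w" using u redD by auto
  obtain b y c where bc: "u = b @ y # c" "word_prod G (b @ c) = w \<otimes> s"
    using exch0[OF uS(1) s i] uS by blast
  have "len (w \<otimes> s) \<le> length (b @ c)" using len_le[of "b @ c"] bc uS by auto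
  then have "len (w \<otimes> s) + 1 \<le> len w" using bc uS by simp
  then show ?thesis using len_mult_le[OF red_carrier[OF u] s] by simp
qed

lemma desc_notin: assumes u: "red w u" and s: "s \<in> S" and i: "s \<notin> set (rl G u)"
  shows "red (w \<otimes> s) (u @ [s])"
proof -
  have S: "set u \<subseteq> S" using u redD by blast
  have sc: "s \<in> carrier G" using s S_c by auto
  have rc: "set (rl G u) \<subseteq> carrier G" using rl_closed S S_sub by blast
  have inj: "inj_on (\<lambda>q. s \<otimes> q \<otimes> s) (set (rl G u))"
  proof (rule inj_onI)
    fix p q assume "p \<in> set (rl G u)" "q \<in> set (rl G u)" "s \<otimes> p \<otimes> s = s \<otimes> q \<otimes> s"
    then show "p = q" using rc sc by (meson l_cancel m_closed r_cancel subsetD)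
  qed
  have ns: "s \<notin> (\<lambda>q. s \<otimes> q \<otimes> s) ` set (rl G u)"
  proof
    assume "s \<in> (\<lambda>q. s \<otimes> q \<otimes> s) ` set (rl G u)"
    then obtain q where q: "q \<in> set (rl G u)" "s = s \<otimes> q \<otimes> s" by auto
    then have "s \<otimes> (s \<otimes> (s \<otimes> s)) = s \<otimes> (s \<otimes> (s \<otimes> q \<otimes> s \<otimes> s))" by simp
    then have "q \<otimes> s = \<one>" using q rc sc s by (simp add: cancelS m_assoc subsetD)
    then have "inv s = q" using q rc sc by (metis inv_equality subsetD)
    then have "s = q" using S_inv[OF s] by simp
    then show False using q i by simp
  qed
  have "distinct (rl G (u @ [s]))"
    using rl_snoc[OF S s] red_distinct[OF u] inj ns by (simp add: distinct_map)
  then have "red (word_prod G (u @ [s])) (u @ [s])" using distinct_red S s by simp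
  then show ?thesis using wp_snoc S s u redD by metis
qed

lemma desc_lt: assumes "red w u" "s \<in> S" "len (w \<otimes> s) < len w" shows "s \<in> set (rl G u)"
proof (rule ccontr)
  assume "s \<notin> set (rl G u)"
  then have r: "red (w \<otimes> s) (u @ [s])" using desc_notin assms by blast
  show False using redD[OF r] redD[OF assms(1)] assms(3) by simp
qed

lemma len_step: assumes "w \<in> carrier G" "s \<in> S"
  shows "len (w \<otimes> s) + 1 = len w \<or> len (w \<otimes> s) = len w + 1"
proof -
  obtain u where u: "red w u" using red_ex assms by auto
  show ?thesis
  proof (cases "s \<in> set (rl G u)")
    case True then show ?thesis using desc_in u assms by auto
  next
    case False
    have r: "red (w \<otimes> s) (u @ [s])" by (rule desc_notin[OF u assms(2) False])
    then show ?thesis using redD[OF r] redD[OF u] by simp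
  qed
qed

lemma red_snoc: assumes "red w (u @ [s])" shows "red (w \<otimes> s) u" "len (w \<otimes> s) < len w"
proof -
  have S: "set u \<subseteq> S" "s \<in> S" using redD[OF assms] by auto
  have w: "w = word_prod G u \<otimes> s" using assms redD wp_snoc S by metis
  have e: "word_prod G u = w \<otimes> s" using w S S_c by (simp add: m_assoc S_sq)
  have "len (w \<otimes> s) \<le> length u" using len_le[OF S(1)] e by simp
  moreover have "len w \<le> len (w \<otimes> s) + 1" using len_mult_le red_carrier[OF assms] S by auto
  ultimately have "length u = len (w \<otimes> s)" using assms redD by fastforce
  then show "red (w \<otimes> s) u" using e S by (simp add: redI)
  show "len (w \<otimes> s) < len w" using \<open>len (w \<otimes> s) \<le> length u\<close> assms redD by fastforce
qed

lemma red_infix: assumes "red w (a @ b @ c)" shows "red (word_prod G b) b"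
proof -
  have S: "set a \<subseteq> S" "set b \<subseteq> S" "set c \<subseteq> S" using redD[OF assms] by auto
  obtain b' where b': "red (word_prod G b) b'" using red_ex[of "word_prod G b"] S by auto
  have b'S: "set b' \<subseteq> S" "word_prod G b' = word_prod G b" "length b' = len (word_prod G b)" using redD[OF b'] by auto
  have "word_prod G (a @ b' @ c) = w" using redD[OF assms] b'S S by (simp add: wp_appendS)
  then have "length (a @ b @ c) \<le> length (a @ b' @ c)" by (intro red_le[OF assms]) (use S b'S in auto)
  then have "length b \<le> length b'" by simp
  moreover have "length b' \<le> length b" using red_le[OF b' S(2)] by simp
  ultimately show ?thesis using b'S S by (auto intro: redI)
qed

lemma red_prefix: "red w (a @ b) \<Longrightarrow> red (word_prod G a) a"
  using red_infix[of w "[]" a b] by simp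

lemma gen_sub: "J \<subseteq> S \<Longrightarrow> subgroup (generate G J) G"
  using generate_is_subgroup S_sub by blast

lemma rl_in_gen: assumes J: "J \<subseteq> S" and v: "set v \<subseteq> J" shows "set (rl G v) \<subseteq> generate G J"
proof
  fix r assume "r \<in> set (rl G v)"
  then obtain b y c where bc: "v = b @ y # c" "r = inv (word_prod G c) \<otimes> y \<otimes> word_prod G c"
    using rl_mem[of v r] v J S_sub by blast
  have "word_prod G c \<in> generate G J" using generate_words[OF J] bc v by auto
  moreover have "y \<in> generate G J" using bc v by (auto intro: generate.incl)
  ultimately show "r \<in> generate G J" using bc gen_sub[OF J] by (simp add: subgroup.m_closed subgroup.m_inv_closed)
qed

lemma S_in_gen: assumes J: "J \<subseteq> S" and s: "s \<in> S" and g: "s \<in> generate G J" shows "s \<in> J"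
proof -
  obtain v where v: "set v \<subseteq> J" "word_prod G v = s" using g generate_words[OF J] by auto
  obtain v' where v': "set v' \<subseteq> set v" "red s v'" using deletion[of v] v J by auto
  have "len s \<le> 1" using len_le[of "[s]"] s S_c by simp
  moreover have "v' \<noteq> []" using redD[OF v'(2)] S_ne1[OF s] by fastforce
  moreover have "length v' = len s" using redD[OF v'(2)] by simp
  ultimately obtain j where "v' = [j]"
    by (metis One_nat_def le_Suc_eq le_zero_eq length_0_conv length_Suc_conv)
  then show ?thesis using v' v redD[OF v'(2)] by (auto simp: S_c)
qed

lemma P1: assumes J: "J \<subseteq> S" shows "red w u \<Longrightarrow> w \<in> generate G J \<Longrightarrow> set u \<subseteq> J"
proof (induction u arbitrary: w rule: rev_induct)
  case Nil then show ?case by simp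
next
  case (snoc x u)
  have S: "set u \<subseteq> S" "x \<in> S" using redD[OF snoc(2)] by auto
  obtain v where v: "set v \<subseteq> J" "word_prod G v = w" using snoc generate_words[OF J] by auto
  obtain v' where v': "set v' \<subseteq> set v" "red w v'" using deletion[of v] v J by auto
  have "oddset G (u @ [x]) = oddset G v'" using oddset_wd snoc v' redD by metis
  then have "set (rl G (u @ [x])) = set (rl G v')" using red_distinct snoc v' oddset_distinct by metis
  also have "\<dots> \<subseteq> generate G J" using rl_in_gen[OF J] v' v by blast
  finally have "x \<in> generate G J" using rl_snoc[OF S] by simp
  then have xJ: "x \<in> J" using S_in_gen[OF J S(2)] by simp
  have "red (w \<otimes> x) u" using red_snoc(1)[OF snoc(2)] .
  moreover have "w \<otimes> x \<in> generate G J" using snoc(3) xJ gen_sub[OF J] by (simp add: subgroup.m_closed generate.incl)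
  ultimately have "set u \<subseteq> J" using snoc.IH by blast
  then show ?case using xJ by simp
qed

end

fun alt :: "'a \<Rightarrow> 'a \<Rightarrow> nat \<Rightarrow> 'a list" where
  "alt y s 0 = []"
| "alt y s (Suc n) = alt s y n @ [s]"

lemma alt_set: "set (alt y s n) \<subseteq> {y, s}"
  by (induction n arbitrary: y s) auto

lemma rep_shift: "concat (replicate n [s, y]) @ [s] = s # concat (replicate n [y, s])"
  by (induction n) auto

lemma alt_parity: "alt y s (2*n) = concat (replicate n [y, s]) \<and> alt y s (Suc (2*n)) = s # concat (replicate n [y, s])"
proof (induction n arbitrary: y s)
  case 0 then show ?case by simp
next
  case (Suc n)
  have a: "alt y' s' (2 * Suc n) = concat (replicate (Suc n) [y', s'])" for y' s' :: 'a
  proof -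
    have n2: "2 * Suc n = Suc (Suc (2*n))" by simp
    have "alt y' s' (2 * Suc n) = alt s' y' (Suc (2*n)) @ [s']" unfolding n2 by (rule alt.simps(2))
    also have "\<dots> = (y' # concat (replicate n [s', y'])) @ [s']" by (simp only: conjunct2[OF Suc.IH[of s' y']])
    also have "\<dots> = concat (replicate (Suc n) [y', s'])" using rep_shift[of n s' y'] by simp
    finally show ?thesis .
  qed
  have "alt y s (Suc (2 * Suc n)) = alt s y (2 * Suc n) @ [s]" by (rule alt.simps(2))
  also have "\<dots> = concat (replicate (Suc n) [s, y]) @ [s]" by (simp only: a)
  also have "\<dots> = s # concat (replicate (Suc n) [y, s])" by (rule rep_shift)
  finally have b: "alt y s (Suc (2 * Suc n)) = s # concat (replicate (Suc n) [y, s])" .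
  show ?case by (rule conjI[OF a b])
qed

context cox begin

lemma min_coset: assumes K: "K \<subseteq> S" and w: "w \<in> carrier G"
  shows "\<exists>a b. b \<in> generate G K \<and> a \<in> carrier G \<and> w = a \<otimes> b \<and> (\<forall>g\<in>generate G K. len a \<le> len (a \<otimes> g))"
proof -
  have sub: "subgroup (generate G K) G" using gen_sub[OF K] .
  have "\<exists>g0. g0 \<in> generate G K \<and> (\<forall>g. g \<in> generate G K \<longrightarrow> len (w \<otimes> g0) \<le> len (w \<otimes> g))"
    by (rule ex_has_least_nat[where k = \<one>]) (rule generate.one)
  then obtain g0 where g0: "g0 \<in> generate G K" and mn: "\<forall>g. g \<in> generate G K \<longrightarrow> len (w \<otimes> g0) \<le> len (w \<otimes> g)"
    by (elim exE conjE)
  have g0c: "g0 \<in> carrier G" by (rule subgroup.mem_carrier[OF sub g0])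
  show ?thesis
  proof (intro exI conjI ballI)
    show "inv g0 \<in> generate G K" using g0 sub by (simp add: subgroup.m_inv_closed)
    show "w \<otimes> g0 \<in> carrier G" using w g0c by simp
    show "w = w \<otimes> g0 \<otimes> inv g0" using w g0c by (simp add: m_assoc)
    fix g assume g: "g \<in> generate G K"
    have "g0 \<otimes> g \<in> generate G K" using g g0 sub by (simp add: subgroup.m_closed)
    then have "len (w \<otimes> g0) \<le> len (w \<otimes> (g0 \<otimes> g))" using mn by simp
    moreover have "g \<in> carrier G" by (rule subgroup.mem_carrier[OF sub g])
    ultimately show "len (w \<otimes> g0) \<le> len (w \<otimes> g0 \<otimes> g)"
      using w g0c by (simp add: m_assoc)
  qed
qed

lemma split_app: "b' @ y # c' = ra @ v \<Longrightarrow> (\<exists>d. ra = b' @ y # d \<and> c' = d @ v) \<or> (\<exists>e. b' = ra @ e \<and> v = e @ y # c')"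
proof -
  assume h: "b' @ y # c' = ra @ v"
  then obtain us where "(b' = ra @ us \<and> us @ y # c' = v) \<or> (b' @ us = ra \<and> y # c' = us @ v)"
    by (auto simp: append_eq_append_conv2)
  then show ?thesis
  proof
    assume "b' = ra @ us \<and> us @ y # c' = v" then show ?thesis by auto
  next
    assume a: "b' @ us = ra \<and> y # c' = us @ v"
    show ?thesis
    proof (cases us)
      case Nil then show ?thesis using a by auto
    next
      case (Cons u0 us') then show ?thesis using a by auto
    qed
  qed
qed

lemma coset_add: assumes K: "K \<subseteq> S" and a: "a \<in> carrier G" and amin: "\<forall>g\<in>generate G K. len a \<le> len (a \<otimes> g)"
  shows "set v \<subseteq> K \<Longrightarrow> red (word_prod G v) v \<Longrightarrow> len (a \<otimes> word_prod G v) = len a + length v"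
proof (induction v rule: rev_induct)
  case Nil then show ?case using a by simp
next
  case (snoc s v)
  have vK: "set v \<subseteq> K" "s \<in> K" using snoc by auto
  have vS: "set v \<subseteq> S" "s \<in> S" using vK K by auto
  have rv: "red (word_prod G v) v" using red_prefix snoc(3) by simp
  have IH: "len (a \<otimes> word_prod G v) = len a + length v" using snoc.IH vK rv by simp
  obtain ra where ra: "red a ra" using red_ex a by auto
  have raS: "set ra \<subseteq> S" "word_prod G ra = a" "length ra = len a" using redD[OF ra] by auto
  let ?X = "a \<otimes> word_prod G v"
  have Xc: "?X \<in> carrier G" using a vS by simp
  have rX: "red ?X (ra @ v)" using raS vS IH by (intro redI) (auto simp: wp_appendS)
  have eq: "a \<otimes> word_prod G (v @ [s]) = ?X \<otimes> s" using a vS S_c by (simp add: wp_snoc m_assoc)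
  have "len (?X \<otimes> s) = len ?X + 1"
  proof (rule ccontr)
    assume "len (?X \<otimes> s) \<noteq> len ?X + 1"
    then have lt: "len (?X \<otimes> s) < len ?X" using len_step[OF Xc vS(2)] by auto
    have "s \<in> set (rl G (ra @ v))" using desc_lt[OF rX vS(2) lt] .
    then have ex: "\<exists>b' y c'. ra @ v = b' @ y # c' \<and> word_prod G (b' @ c') = word_prod G (ra @ v) \<otimes> s"
      by (intro exch0) (use raS vS in auto)
    have wpX: "word_prod G (ra @ v) = ?X" using raS vS by (simp add: wp_appendS)
    from ex obtain b' y c' where bc: "ra @ v = b' @ y # c'" "word_prod G (b' @ c') = ?X \<otimes> s"
      unfolding wpX by (elim exE conjE)
    from split_app[OF bc(1)[symmetric]] show False
    proof
      assume "\<exists>d. ra = b' @ y # d \<and> c' = d @ v"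
      then obtain d where d: "ra = b' @ y # d" "c' = d @ v" by (elim exE conjE)
      have dS: "set b' \<subseteq> S" "set d \<subseteq> S" using d raS by auto
      let ?g = "word_prod G v \<otimes> s \<otimes> inv (word_prod G v)"
      have vg: "word_prod G v \<in> generate G K" using generate_words[OF K] vK by auto
      have sg: "s \<in> generate G K" using vK by (auto intro: generate.incl)
      have g: "?g \<in> generate G K" using vg sg gen_sub[OF K] by (simp add: subgroup.m_closed subgroup.m_inv_closed)
      have "word_prod G (b' @ d) \<otimes> word_prod G v = ?X \<otimes> s"
        using bc(2) d dS vS by (simp add: wp_appendS m_assoc)
      moreover have "word_prod G (b' @ d) = word_prod G (b' @ d) \<otimes> word_prod G v \<otimes> inv (word_prod G v)"
        using dS vS by (simp add: m_assoc)
      ultimately have "word_prod G (b' @ d) = ?X \<otimes> s \<otimes> inv (word_prod G v)" by simp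
      also have "\<dots> = a \<otimes> ?g" using a vS S_c by (simp add: m_assoc)
      finally have e: "word_prod G (b' @ d) = a \<otimes> ?g" .
      have "len (a \<otimes> ?g) \<le> length (b' @ d)" using len_le[of "b' @ d"] dS e by simp
      also have "\<dots> < len a" using d raS by simp
      finally have "len (a \<otimes> ?g) < len a" .
      moreover have "len a \<le> len (a \<otimes> ?g)" using amin g by simp
      ultimately show False by simp
    next
      assume "\<exists>e. b' = ra @ e \<and> v = e @ y # c'"
      then obtain e where e: "b' = ra @ e" "v = e @ y # c'" by (elim exE conjE)
      have eS: "set e \<subseteq> S" "set c' \<subseteq> S" using e vS by auto
      have "a \<otimes> word_prod G (e @ c') = a \<otimes> word_prod G (v @ [s])"
        using bc(2) e eS raS eq by (simp add: wp_appendS m_assoc)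
      moreover have "word_prod G (e @ c') \<in> carrier G" "word_prod G (v @ [s]) \<in> carrier G" using eS vS by auto
      ultimately have "word_prod G (e @ c') = word_prod G (v @ [s])"
        using a by simp
      then have "length (v @ [s]) \<le> length (e @ c')"
        by (intro red_le[OF snoc(3)]) (use eS in auto)
      then show False using e by simp
    qed
  qed
  then show ?case using eq IH by simp
qed

lemma coset_add2: assumes K: "K \<subseteq> S" and a: "a \<in> carrier G" and amin: "\<forall>g\<in>generate G K. len a \<le> len (a \<otimes> g)"
  and b: "b \<in> generate G K"
  shows "len (a \<otimes> b) = len a + len b"
proof -
  have bc: "b \<in> carrier G" by (rule subgroup.mem_carrier[OF gen_sub[OF K] b])
  obtain rb where rb: "red b rb" using red_ex bc by auto
  have "set rb \<subseteq> K" using P1[OF K rb b] .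
  then show ?thesis using coset_add[OF K a amin, of rb] redD[OF rb] rb by simp
qed

end

context cox begin

lemma red_alt:
  "y \<in> S \<Longrightarrow> s \<in> S \<Longrightarrow> y \<noteq> s \<Longrightarrow> set v \<subseteq> {y, s} \<Longrightarrow> red (word_prod G v) v \<Longrightarrow> v \<noteq> [] \<Longrightarrow> last v = s
   \<Longrightarrow> v = alt y s (length v)"
proof (induction v arbitrary: y s rule: rev_induct)
  case Nil then show ?case by simp
next
  case (snoc x v)
  have xs: "x = s" using snoc by simp
  show ?case
  proof (cases "v = []")
    case True then show ?thesis using xs by simp
  next
    case False
    then obtain v' z where vz: "v = v' @ [z]" by (metis rev_exhaust)
    have zS: "z \<in> {y, s}" using snoc vz by auto
    have zy: "z = y"
    proof (rule ccontr)
      assume "z \<noteq> y"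
      then have "z = s" using zS by auto
      then have "red (word_prod G [s, s]) [s, s]"
        using red_infix[of "word_prod G (v @ [x])" v' "[s, s]" "[]"] snoc(6) vz xs by simp
      moreover have "word_prod G [s, s] = \<one>" using S_sq[OF snoc(3)] S_c[OF snoc(3)] by simp
      ultimately have "length [s, s] \<le> length ([] :: 'a list)" using red_le[of \<one> "[s,s]" "[]"] by simp
      then show False by simp
    qed
    have rv: "red (word_prod G v) v" using red_prefix snoc(6) by blast
    have "v = alt s y (length v)"
      using snoc.IH[of s y] snoc(2,3,4,5) rv False vz zy by auto
    then show ?thesis using xs by (metis alt.simps(2) length_append_singleton)
  qed
qed

lemma dihedral:
  assumes w: "w \<in> carrier G" and y: "y \<in> S" and s: "s \<in> S" and ys: "y \<noteq> s"
    and dy: "len (w \<otimes> y) < len w" and ds: "len (w \<otimes> s) < len w"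
  shows "ord (y \<otimes> s) \<noteq> 0 \<and> (\<exists>r. red (w \<otimes> s) r \<and> r \<noteq> [] \<and> last r = y)"
proof -
  let ?K = "{y, s}"
  have K: "?K \<subseteq> S" using y s by auto
  have sub: "subgroup (generate G ?K) G" using gen_sub[OF K] .
  obtain a b where b: "b \<in> generate G ?K" and a: "a \<in> carrier G" and wab: "w = a \<otimes> b"
    and amin: "\<forall>g\<in>generate G ?K. len a \<le> len (a \<otimes> g)"
    using min_coset[OF K w] by (elim exE conjE)
  have bc: "b \<in> carrier G" by (rule subgroup.mem_carrier[OF sub b])
  have sK: "s \<in> generate G ?K" "y \<in> generate G ?K" by (auto intro: generate.incl)
  have bs: "b \<otimes> s \<in> generate G ?K" "b \<otimes> y \<in> generate G ?K" using b sK sub by (auto simp: subgroup.m_closed)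
  have l1: "len w = len a + len b" using coset_add2[OF K a amin b] wab by simp
  have l2: "len (w \<otimes> s) = len a + len (b \<otimes> s)"
    using coset_add2[OF K a amin bs(1)] wab a bc s S_c by (simp add: m_assoc)
  have l3: "len (w \<otimes> y) = len a + len (b \<otimes> y)"
    using coset_add2[OF K a amin bs(2)] wab a bc y S_c by (simp add: m_assoc)
  have lbs: "len (b \<otimes> s) + 1 = len b" using len_step[OF bc s] l1 l2 ds by auto
  have lby: "len (b \<otimes> y) + 1 = len b" using len_step[OF bc y] l1 l3 dy by auto
  obtain r1 where r1: "red (b \<otimes> s) r1" using red_ex[of "b \<otimes> s"] bc s S_c by auto
  obtain r2 where r2: "red (b \<otimes> y) r2" using red_ex[of "b \<otimes> y"] bc y S_c by auto
  have r1K: "set r1 \<subseteq> ?K" using P1[OF K r1 bs(1)] .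
  have r2K: "set r2 \<subseteq> ?K" using P1[OF K r2 bs(2)] .
  have wr1: "word_prod G (r1 @ [s]) = b" using redD[OF r1] s bc S_c
    by (simp add: wp_snoc m_assoc S_sq)
  have wr2: "word_prod G (r2 @ [y]) = b" using redD[OF r2] y bc S_c
    by (simp add: wp_snoc m_assoc S_sq)
  have rr1: "red b (r1 @ [s])" using redD[OF r1] wr1 lbs s by (intro redI) auto
  have rr2: "red b (r2 @ [y])" using redD[OF r2] wr2 lby y by (intro redI) auto
  let ?k = "len b"
  have A1': "r1 @ [s] = alt y s (length (r1 @ [s]))"
    by (rule red_alt[OF y s ys]) (use r1K rr1 wr1 in auto)
  have lk1: "length (r1 @ [s]) = ?k" using redD[OF rr1] by simp
  have A1: "r1 @ [s] = alt y s ?k" using A1' unfolding lk1 .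
  have A2': "r2 @ [y] = alt s y (length (r2 @ [y]))"
    by (rule red_alt[OF s y ys[symmetric]]) (use r2K rr2 wr2 in auto)
  have lk2: "length (r2 @ [y]) = ?k" using redD[OF rr2] by simp
  have A2: "r2 @ [y] = alt s y ?k" using A2' unfolding lk2 .
  have eqb: "word_prod G (alt y s ?k) = word_prod G (alt s y ?k)" using A1 A2 wr1 wr2 by simp
  have k1: "?k \<ge> 1" using lbs by simp
  have k2: "?k \<noteq> 1"
  proof
    assume "?k = 1"
    then have "word_prod G (alt y s 1) = word_prod G (alt s y 1)" using eqb by simp
    then show False using ys y s S_c by simp
  qed
  then obtain k' where kk: "?k = Suc k'" and k'1: "k' \<ge> 1" using k1 by (metis Suc_le_D le_antisym not_less_eq_eq Suc_leI)
  have yc: "y \<in> carrier G" and sc: "s \<in> carrier G" using y s S_c by auto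
  let ?P = "y \<otimes> s"
  have Pc: "?P \<in> carrier G" using yc sc by simp
  have iP: "inv ?P = s \<otimes> y" using yc sc S_inv[OF y] S_inv[OF s] by (simp add: inv_mult_group)
  have ipow: "(s \<otimes> y) [^] n = inv (?P [^] n)" for n :: nat
    using nat_pow_inv[OF Pc, of n] iP by simp
  have ordne: "ord ?P \<noteq> 0"
  proof -
    define n where "n = ?k div 2"
    have n: "?k = 2 * n \<or> ?k = Suc (2 * n)" unfolding n_def by presburger
    have "\<exists>j::nat. j \<noteq> 0 \<and> ?P [^] j = \<one>"
    proof (cases "?k = 2 * n")
      case True
      have n1: "n \<noteq> 0" using True k1 by auto
      have e: "?P [^] n = (s \<otimes> y) [^] n"
      proof -
        have "?P [^] n = word_prod G (alt y s (2*n))" using W2_wp[OF y s, of n] alt_parity[of y s n] by simp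
        also have "\<dots> = word_prod G (alt s y (2*n))" using eqb True by simp
        also have "\<dots> = (s \<otimes> y) [^] n" using W2_wp[OF s y, of n] alt_parity[of s y n] by simp
        finally show ?thesis .
      qed
      have "?P [^] n \<otimes> ?P [^] n = ?P [^] n \<otimes> inv (?P [^] n)" using e ipow[of n] by simp
      also have "\<dots> = \<one>" using Pc by simp
      finally have "?P [^] (n + n) = \<one>" using nat_pow_mult[OF Pc, of n n] by simp
      then show ?thesis using n1 by (intro exI[of _ "n + n"]) simp
    next
      case False
      then have Tk: "?k = Suc (2 * n)" using n by simp
      have e: "s \<otimes> ?P [^] n = y \<otimes> (s \<otimes> y) [^] n"
      proof -
        have "s \<otimes> ?P [^] n = word_prod G (alt y s (Suc (2*n)))" using W2_wp[OF y s, of n] alt_parity[of y s n] by simp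
        also have "\<dots> = word_prod G (alt s y (Suc (2*n)))" using eqb Tk by simp
        also have "\<dots> = y \<otimes> (s \<otimes> y) [^] n" using W2_wp[OF s y, of n] alt_parity[of s y n] by simp
        finally show ?thesis .
      qed
      have Pn: "?P [^] n \<in> carrier G" using Pc by simp
      have "?P \<otimes> ?P [^] n = y \<otimes> (s \<otimes> ?P [^] n)" using yc sc Pn by (simp add: m_assoc)
      also have "\<dots> = y \<otimes> (y \<otimes> (s \<otimes> y) [^] n)" using e by simp
      also have "\<dots> = (s \<otimes> y) [^] n" using cancelS[OF y] yc sc by simp
      also have "\<dots> = inv (?P [^] n)" by (rule ipow)
      finally have e2: "?P \<otimes> ?P [^] n = inv (?P [^] n)" .
      have "?P [^] (Suc n) \<otimes> ?P [^] n = ?P \<otimes> ?P [^] n \<otimes> ?P [^] n"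
        using nat_pow_Suc2[OF Pc, of n] by simp
      also have "\<dots> = \<one>" using e2 Pn by simp
      finally have "?P [^] (Suc n + n) = \<one>" using nat_pow_mult[OF Pc, of "Suc n" n] by simp
      then show ?thesis by (intro exI[of _ "Suc n + n"]) simp
    qed
    then obtain j :: nat where "j \<noteq> 0" "?P [^] j = \<one>" by (elim exE conjE)
    then show ?thesis using ord_eq_0[OF Pc] by auto
  qed
  have r1alt: "r1 = alt s y k'" using A1 kk by simp
  have r1ne: "r1 \<noteq> []" "last r1 = y" using r1alt k'1 by (cases k', auto)+
  obtain ra where ra: "red a ra" using red_ex a by auto
  have "red (w \<otimes> s) (ra @ r1)"
  proof (rule redI)
    show "set (ra @ r1) \<subseteq> S" using redD[OF ra] redD[OF r1] by auto
    show "word_prod G (ra @ r1) = w \<otimes> s" using redD[OF ra] redD[OF r1] wab a bc sc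
      by (simp add: wp_appendS m_assoc)
    show "length (ra @ r1) = len (w \<otimes> s)" using redD[OF ra] redD[OF r1] l2 by simp
  qed
  then show ?thesis using ordne r1ne by (intro conjI exI[of _ "ra @ r1"]) auto
qed

end

context cox begin

definition consec :: "'a list \<Rightarrow> bool" where
  "consec ts \<longleftrightarrow> (\<forall>i. 0 < i \<and> i < length ts \<longrightarrow> coxeter_m G (ts ! (i - 1)) (ts ! i) = 0)"

lemma consec_snoc: assumes "consec (ts @ [t])" shows "consec ts"
  unfolding consec_def
proof (intro allI impI)
  fix i assume i: "0 < i \<and> i < length ts"
  then have "coxeter_m G ((ts @ [t]) ! (i - 1)) ((ts @ [t]) ! i) = 0" using assms unfolding consec_def by auto
  moreover have "i - 1 < length ts" using i by linarith
  ultimately show "coxeter_m G (ts ! (i - 1)) (ts ! i) = 0" using i by (simp add: nth_append)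
qed

lemma consec_last: "consec (ts @ [t]) \<Longrightarrow> ts \<noteq> [] \<Longrightarrow> coxeter_m G (last ts) t = 0"
proof -
  assume c: "consec (ts @ [t])" and ne: "ts \<noteq> []"
  have "coxeter_m G ((ts @ [t]) ! (length ts - 1)) ((ts @ [t]) ! length ts) = 0"
    using c ne unfolding consec_def by (metis Suc_pred length_append_singleton length_greater_0_conv lessI)
  then show ?thesis using ne by (simp add: nth_append last_conv_nth)
qed

inductive Psi :: "'a set \<Rightarrow> 'a list \<Rightarrow> 'a \<Rightarrow> bool" for J where
  Psi0: "g \<in> generate G J \<Longrightarrow> Psi J [] g"
| PsiS: "Psi J ts w \<Longrightarrow> v \<in> generate G (J \<union> {t}) \<Longrightarrow> v \<notin> generate G J \<Longrightarrow> Psi J (ts @ [t]) (w \<otimes> v)"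

inductive Pat :: "'a set \<Rightarrow> 'a list \<Rightarrow> 'a list \<Rightarrow> bool" for J where
  Pat0: "set u \<subseteq> J \<Longrightarrow> Pat J [] u"
| PatS: "Pat J ts u \<Longrightarrow> set e \<subseteq> J \<union> {t} \<Longrightarrow> t \<in> set e \<Longrightarrow> Pat J (ts @ [t]) (u @ e)"

lemma gen_carrier: "J \<subseteq> S \<Longrightarrow> g \<in> generate G J \<Longrightarrow> g \<in> carrier G"
  using subgroup.mem_carrier[OF gen_sub] by blast

lemma Psi_carrier0: "Psi J ts w \<Longrightarrow> J \<subseteq> S \<Longrightarrow> set ts \<subseteq> S \<Longrightarrow> w \<in> carrier G"
proof (induction rule: Psi.induct)
  case (Psi0 g) then show ?case using gen_carrier by blast
next
  case (PsiS ts w v t)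
  have K: "J \<union> {t} \<subseteq> S" using PsiS by auto
  have "v \<in> carrier G" using gen_carrier[OF K PsiS(2)] .
  then show ?case using PsiS by auto
qed

lemma Psi_carrier: "J \<subseteq> S \<Longrightarrow> Psi J ts w \<Longrightarrow> set ts \<subseteq> S \<Longrightarrow> w \<in> carrier G"
  using Psi_carrier0 by blast

lemma Psi_Nil: "Psi J [] w \<Longrightarrow> w \<in> generate G J"
  by (cases rule: Psi.cases) auto

lemma Psi_snocE: "Psi J (ts @ [t]) w \<Longrightarrow> \<exists>w' v. Psi J ts w' \<and> v \<in> generate G (J \<union> {t}) \<and> v \<notin> generate G J \<and> w = w' \<otimes> v"
  by (cases rule: Psi.cases) auto

lemma Psi_mult_WJ: assumes J: "J \<subseteq> S" and ts: "set ts \<subseteq> S" and P: "Psi J ts w" and g: "g \<in> generate G J"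
  shows "Psi J ts (w \<otimes> g)"
proof (cases ts rule: rev_cases)
  case Nil
  then have "w \<in> generate G J" using P Psi_Nil by simp
  then have "w \<otimes> g \<in> generate G J" using g gen_sub[OF J] by (simp add: subgroup.m_closed)
  then show ?thesis using Nil by (simp add: Psi0)
next
  case (snoc ts' t)
  obtain w' v where wv: "Psi J ts' w'" "v \<in> generate G (J \<union> {t})" "v \<notin> generate G J" "w = w' \<otimes> v"
    using Psi_snocE P snoc by blast
  have K: "J \<union> {t} \<subseteq> S" using J ts snoc by auto
  have gK: "g \<in> generate G (J \<union> {t})" using g mono_generate[of J "J \<union> {t}"] by auto
  have vg: "v \<otimes> g \<in> generate G (J \<union> {t})" using wv(2) gK gen_sub[OF K] by (simp add: subgroup.m_closed)
  have gc: "g \<in> carrier G" using gen_carrier[OF J g] .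
  have vc: "v \<in> carrier G" using gen_carrier[OF K wv(2)] .
  have w'c: "w' \<in> carrier G" using Psi_carrier[OF J wv(1)] ts snoc by auto
  have vgn: "v \<otimes> g \<notin> generate G J"
  proof
    assume "v \<otimes> g \<in> generate G J"
    then have "v \<otimes> g \<otimes> inv g \<in> generate G J" using g gen_sub[OF J] by (simp add: subgroup.m_closed subgroup.m_inv_closed)
    then show False using wv(3) vc gc by (simp add: m_assoc)
  qed
  have "Psi J (ts' @ [t]) (w' \<otimes> (v \<otimes> g))" using PsiS[OF wv(1) vg vgn] .
  then show ?thesis using snoc wv(4) w'c vc gc by (simp add: m_assoc)
qed

lemma Psi_mult_t: assumes J: "J \<subseteq> S" and ts: "set (ts @ [t]) \<subseteq> S" and P: "Psi J (ts @ [t]) w"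
  shows "Psi J (ts @ [t]) (w \<otimes> t) \<or> Psi J ts (w \<otimes> t)"
proof -
  obtain w' v where wv: "Psi J ts w'" "v \<in> generate G (J \<union> {t})" "v \<notin> generate G J" "w = w' \<otimes> v"
    using Psi_snocE P by blast
  have K: "J \<union> {t} \<subseteq> S" using J ts by auto
  have tc: "t \<in> carrier G" using ts S_c by auto
  have vc: "v \<in> carrier G" using gen_carrier[OF K wv(2)] .
  have w'c: "w' \<in> carrier G" using Psi_carrier[OF J wv(1)] ts by auto
  have e: "w \<otimes> t = w' \<otimes> (v \<otimes> t)" using wv(4) w'c vc tc by (simp add: m_assoc)
  show ?thesis
  proof (cases "v \<otimes> t \<in> generate G J")
    case True
    then show ?thesis using Psi_mult_WJ[OF J _ wv(1) True] ts e by auto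
  next
    case False
    have "t \<in> generate G (J \<union> {t})" by (auto intro: generate.incl)
    then have "v \<otimes> t \<in> generate G (J \<union> {t})" using wv(2) gen_sub[OF K] by (simp add: subgroup.m_closed)
    then show ?thesis using PsiS[OF wv(1) _ False] e by auto
  qed
qed

lemma Pat_appJ: "Pat J ts u \<Longrightarrow> y \<in> J \<Longrightarrow> Pat J ts (u @ [y])"
proof (induction rule: Pat.induct)
  case (Pat0 u) then show ?case by (intro Pat.intros(1)) auto
next
  case (PatS ts u e t)
  then have "Pat J (ts @ [t]) (u @ (e @ [y]))" by (intro Pat.PatS) auto
  then show ?case by simp
qed

lemma Pat_appT: assumes P: "Pat J (ts @ [t]) u" shows "Pat J (ts @ [t]) (u @ [t])"
  using P
proof (cases rule: Pat.cases)
  case (PatS ts' u' e t')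
  then have "Pat J (ts' @ [t']) (u' @ (e @ [t']))" using PatS by (intro Pat.PatS) auto
  then show ?thesis using PatS by simp
qed simp

lemma Pat_new: "Pat J ts u \<Longrightarrow> Pat J (ts @ [t]) (u @ [t])"
  by (rule PatS) auto

lemma last_filter_app: "filter P ys \<noteq> [] \<Longrightarrow> last (filter P (xs @ ys)) = last (filter P ys)"
  by simp

lemma Pat_filter: "Pat J ts u \<Longrightarrow> set ts \<inter> J = {} \<Longrightarrow>
  (ts = [] \<longrightarrow> filter (\<lambda>z. z \<notin> J) u = []) \<and>
  (ts \<noteq> [] \<longrightarrow> filter (\<lambda>z. z \<notin> J) u \<noteq> [] \<and> last (filter (\<lambda>z. z \<notin> J) u) = last ts)"
proof (induction rule: Pat.induct)
  case (Pat0 u)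
  then show ?case by (auto simp: filter_empty_conv)
next
  case (PatS ts u e t)
  have tJ: "t \<notin> J" using PatS by auto
  have fe: "set (filter (\<lambda>z. z \<notin> J) e) \<subseteq> {t}" using PatS by auto
  have fne: "filter (\<lambda>z. z \<notin> J) e \<noteq> []" using PatS tJ by (auto simp: filter_empty_conv)
  have "last (filter (\<lambda>z. z \<notin> J) e) = t" using fe fne last_in_set by fastforce
  then show ?case using fne by simp
qed

lemma filter_last_word: assumes "set e \<subseteq> J \<union> {t}" "t \<in> set e" "t \<notin> J"
  shows "filter (\<lambda>z. z \<notin> J) (x @ e) \<noteq> [] \<and> last (filter (\<lambda>z. z \<notin> J) (x @ e)) = t"
proof -
  have fe: "set (filter (\<lambda>z. z \<notin> J) e) \<subseteq> {t}" using assms by auto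
  have fne: "filter (\<lambda>z. z \<notin> J) e \<noteq> []" using assms by (auto simp: filter_empty_conv)
  have "last (filter (\<lambda>z. z \<notin> J) e) = t" using fe fne last_in_set by fastforce
  then show ?thesis using fne by simp
qed

lemma ord_tt: "t \<in> S \<Longrightarrow> coxeter_m G t t \<noteq> 0"
  using S_sq[of t] S_c[of t] ord_eq_1[of \<one>] by (simp add: coxeter_m_def)

lemma main_ind: assumes J: "J \<subseteq> S"
  shows "set ts \<subseteq> S \<Longrightarrow> set ts \<inter> J = {} \<Longrightarrow> consec ts \<Longrightarrow> Psi J ts w \<Longrightarrow> red w u \<Longrightarrow> Pat J ts u"
proof (induction ts arbitrary: w u rule: rev_induct)
  case Nil
  have "w \<in> generate G J" using Psi_Nil Nil(4) by blast
  then have "set u \<subseteq> J" using P1[OF J Nil(5)] by blast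
  then show ?case by (rule Pat.intros(1))
next
  case (snoc t ts)
  have tsS: "set ts \<subseteq> S" "t \<in> S" using snoc by auto
  have tJ: "t \<notin> J" "set ts \<inter> J = {}" using snoc by auto
  have cts: "consec ts" using consec_snoc snoc by blast
  have outer: "\<And>w u. Psi J ts w \<Longrightarrow> red w u \<Longrightarrow> Pat J ts u" using snoc.IH tsS tJ cts by blast
  let ?K = "J \<union> {t}"
  have K: "?K \<subseteq> S" using J tsS by auto
  have inner: "\<forall>w u. len w = n \<longrightarrow> Psi J (ts @ [t]) w \<longrightarrow> red w u \<longrightarrow> Pat J (ts @ [t]) u" for n
  proof (induction n rule: less_induct)
    case (less n)
    show ?case
    proof (intro allI impI)
      fix w u assume lw: "len w = n" and P: "Psi J (ts @ [t]) w" and ru: "red w u"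
      have IHi: "\<And>w' u'. len w' < len w \<Longrightarrow> Psi J (ts @ [t]) w' \<Longrightarrow> red w' u' \<Longrightarrow> Pat J (ts @ [t]) u'"
        using less lw by blast
      have wc: "w \<in> carrier G" using red_carrier[OF ru] .
      obtain a b where b: "b \<in> generate G ?K" and a: "a \<in> carrier G" and wab: "w = a \<otimes> b"
        and amin: "\<forall>g\<in>generate G ?K. len a \<le> len (a \<otimes> g)"
        using min_coset[OF K wc] by (elim exE conjE)
      have bc: "b \<in> carrier G" using gen_carrier[OF K b] .
      show "Pat J (ts @ [t]) u"
      proof (cases "b = \<one>")
        case True
        then have aw: "a = w" using wab a by simp
        obtain w' v where wv: "Psi J ts w'" "v \<in> generate G ?K" "v \<notin> generate G J" "w = w' \<otimes> v"
          using Psi_snocE P by blast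
        have vc: "v \<in> carrier G" using gen_carrier[OF K wv(2)] .
        have iv: "inv v \<in> generate G ?K" using wv(2) gen_sub[OF K] by (simp add: subgroup.m_inv_closed)
        have w'c: "w' \<in> carrier G" using Psi_carrier[OF J wv(1) tsS(1)] .
        have w'e: "w' = w \<otimes> inv v" using wv(4) w'c vc by (simp add: m_assoc)
        have lw': "len w' = len w + len (inv v)" using coset_add2[OF K a amin iv] aw w'e by simp
        obtain ra where ra: "red w ra" using red_ex wc by auto
        obtain rv where rv: "red (inv v) rv" using red_ex[of "inv v"] vc by auto
        have rvK: "set rv \<subseteq> ?K" using P1[OF K rv iv] .
        have trv: "t \<in> set rv"
        proof (rule ccontr)
          assume "t \<notin> set rv"
          then have "set rv \<subseteq> J" using rvK by auto
          then have "inv v \<in> generate G J" using generate_words[OF J] redD[OF rv] by auto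
          then have "inv (inv v) \<in> generate G J" using gen_sub[OF J] by (simp add: subgroup.m_inv_closed)
          then show False using wv(3) vc by simp
        qed
        have "red w' (ra @ rv)"
          using redD[OF ra] redD[OF rv] w'e lw' by (intro redI) (auto simp: wp_appendS)
        then have pt: "Pat J ts (ra @ rv)" using outer wv(1) by blast
        have fl: "filter (\<lambda>z. z \<notin> J) (ra @ rv) \<noteq> [] \<and> last (filter (\<lambda>z. z \<notin> J) (ra @ rv)) = t"
          using filter_last_word[OF rvK trv tJ(1)] .
        show ?thesis
        proof (cases "ts = []")
          case True then show ?thesis using Pat_filter[OF pt tJ(2)] fl by simp
        next
          case False
          then have "last ts = t" using Pat_filter[OF pt tJ(2)] fl by simp
          then have "coxeter_m G t t = 0" using consec_last[OF snoc(4) False] by simp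
          then show ?thesis using ord_tt[OF tsS(2)] by simp
        qed
      next
        case False
        obtain rb where rb: "red b rb" using red_ex bc by auto
        have rbK: "set rb \<subseteq> ?K" using P1[OF K rb b] .
        have "rb \<noteq> []" using False redD[OF rb] by auto
        then obtain rb' s where rbs: "rb = rb' @ [s]" by (metis rev_exhaust)
        have sK: "s \<in> ?K" using rbK rbs by auto
        have sS: "s \<in> S" using sK K by auto
        have sc: "s \<in> carrier G" using S_c[OF sS] .
        have lbs: "len (b \<otimes> s) < len b" using red_snoc(2)[of b rb' s] rb rbs by simp
        have bsK: "b \<otimes> s \<in> generate G ?K" using b sK gen_sub[OF K] by (simp add: subgroup.m_closed generate.incl)
        have l1: "len w = len a + len b" using coset_add2[OF K a amin b] wab by simp
        have l2: "len (w \<otimes> s) = len a + len (b \<otimes> s)"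
          using coset_add2[OF K a amin bsK] wab a bc sc by (simp add: m_assoc)
        have ds: "len (w \<otimes> s) < len w" using l1 l2 lbs by simp
        have "u \<noteq> []" using ds redD[OF ru] by auto
        then obtain u'' y where uy: "u = u'' @ [y]" by (metis rev_exhaust)
        have ru'': "red (w \<otimes> y) u''" and dy: "len (w \<otimes> y) < len w"
          using red_snoc[of w u'' y] ru uy by auto
        have yS: "y \<in> S" using redD[OF ru] uy by auto
        have yc: "y \<in> carrier G" using S_c[OF yS] .
        have tsS': "set (ts @ [t]) \<subseteq> S" using tsS by auto
        show ?thesis
        proof (cases "y \<in> J")
          case True
          have "Psi J (ts @ [t]) (w \<otimes> y)"
            using Psi_mult_WJ[OF J tsS' P] True by (auto intro: generate.incl)
          then have "Pat J (ts @ [t]) u''" using IHi dy ru'' by blast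
          then show ?thesis using uy Pat_appJ True by blast
        next
          case yJ: False
          show ?thesis
          proof (cases "y = t")
            case True
            from Psi_mult_t[OF J tsS' P] show ?thesis
            proof
              assume "Psi J (ts @ [t]) (w \<otimes> t)"
              then have "Pat J (ts @ [t]) u''" using IHi dy ru'' True by blast
              then show ?thesis using uy Pat_appT True by blast
            next
              assume "Psi J ts (w \<otimes> t)"
              then have "Pat J ts u''" using outer ru'' True by blast
              then show ?thesis using uy Pat_new True by blast
            qed
          next
            case ynt: False
            have yK: "y \<notin> ?K" using yJ ynt by auto
            have yns: "y \<noteq> s" using yK sK by auto
            obtain r where r: "red (w \<otimes> s) r" "r \<noteq> []" "last r = y" and ordys: "ord (y \<otimes> s) \<noteq> 0"
              using dihedral[OF wc yS sS yns dy ds] by blast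
            obtain r' where r': "r = r' @ [y]" using r by (metis append_butlast_last_id)
            have flr: "filter (\<lambda>z. z \<notin> J) r \<noteq> [] \<and> last (filter (\<lambda>z. z \<notin> J) r) = y"
              using filter_last_word[of "[y]" J y r'] yJ r' by simp
            have contra1: "\<not> Psi J (ts @ [t]) (w \<otimes> s)"
            proof
              assume "Psi J (ts @ [t]) (w \<otimes> s)"
              then have "Pat J (ts @ [t]) r" using IHi ds r(1) by blast
              then have "last (filter (\<lambda>z. z \<notin> J) r) = t" using Pat_filter[of J "ts @ [t]" r] tJ by auto
              then show False using flr ynt by simp
            qed
            show ?thesis
            proof (cases "s \<in> J")
              case True
              have "Psi J (ts @ [t]) (w \<otimes> s)"
                using Psi_mult_WJ[OF J tsS' P] True by (auto intro: generate.incl)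
              then show ?thesis using contra1 by simp
            next
              case False
              then have st: "s = t" using sK by auto
              then have "Psi J ts (w \<otimes> s)" using Psi_mult_t[OF J tsS' P] contra1 by auto
              then have pr: "Pat J ts r" using outer r(1) by blast
              show ?thesis
              proof (cases "ts = []")
                case True then show ?thesis using Pat_filter[OF pr tJ(2)] flr by simp
              next
                case tsne: False
                then have "last ts = y" using Pat_filter[OF pr tJ(2)] flr by simp
                then have "coxeter_m G y t = 0" using consec_last[OF snoc(4) tsne] by simp
                then show ?thesis using ordys st by (simp add: coxeter_m_def)
              qed
            qed
          qed
        qed
      qed
    qed
  qed
  show ?case using inner snoc(5,6) by blast
qed

end

context cox begin

lemma Psi_from_vs: assumes J: "J \<subseteq> S"
  shows "set ts \<subseteq> S \<Longrightarrow> length vs = length ts \<Longrightarrow>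
    (\<forall>i<length ts. vs ! i \<in> generate G (J \<union> {ts ! i}) - generate G J) \<Longrightarrow> Psi J ts (word_prod G vs)"
proof (induction ts arbitrary: vs rule: rev_induct)
  case Nil
  then have "vs = []" by simp
  then show ?case by (simp add: Psi0 generate.one)
next
  case (snoc t ts)
  obtain vs' v where vs: "vs = vs' @ [v]" using snoc(3) by (metis length_0_conv rev_exhaust snoc_eq_iff_butlast)
  have len: "length vs' = length ts" using snoc(3) vs by simp
  have el: "\<forall>i<length ts. vs' ! i \<in> generate G (J \<union> {ts ! i}) - generate G J"
  proof (intro allI impI)
    fix i assume i: "i < length ts"
    then have "vs ! i \<in> generate G (J \<union> {(ts @ [t]) ! i}) - generate G J" using snoc(4) by simp
    then show "vs' ! i \<in> generate G (J \<union> {ts ! i}) - generate G J" using i len vs by (simp add: nth_append)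
  qed
  have IH: "Psi J ts (word_prod G vs')" using snoc.IH[OF _ len el] snoc(2) by simp
  have "vs ! length ts \<in> generate G (J \<union> {(ts @ [t]) ! length ts}) - generate G J"
    using snoc(4)[rule_format, of "length ts"] by simp
  then have v: "v \<in> generate G (J \<union> {t})" "v \<notin> generate G J" using vs len by (auto simp: nth_append)
  have K: "J \<union> {t} \<subseteq> S" using J snoc(2) by auto
  have vc: "v \<in> carrier G" using gen_carrier[OF K v(1)] .
  have vsc: "set vs' \<subseteq> carrier G"
  proof
    fix x assume "x \<in> set vs'"
    then obtain i where i: "i < length vs'" "x = vs' ! i" by (metis in_set_conv_nth)
    have Ki: "J \<union> {ts ! i} \<subseteq> S" using J snoc(2) i len by (auto simp: nth_append)
    show "x \<in> carrier G" using el i len gen_carrier[OF Ki] by auto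
  qed
  have "Psi J (ts @ [t]) (word_prod G vs' \<otimes> v)" using PsiS[OF IH v] .
  then show ?case using vs vsc vc by (simp add: wp_append)
qed

lemma Pat_blocks: "Pat J ts u \<Longrightarrow> ts \<noteq> [] \<Longrightarrow> \<exists>us. length us = length ts \<and> concat us = u \<and>
    (\<forall>i<length ts. set (us ! i) \<subseteq> J \<union> {ts ! i} \<and> ts ! i \<in> set (us ! i))"
proof (induction rule: Pat.induct)
  case (Pat0 u) then show ?case by simp
next
  case (PatS ts u e t)
  show ?case
  proof (cases "ts = []")
    case True
    then have "Pat J [] u" using PatS(1) by simp
    then have "set u \<subseteq> J" by (cases rule: Pat.cases) auto
    then show ?thesis using True PatS by (intro exI[of _ "[u @ e]"]) auto
  next
    case False
    then obtain us where us: "length us = length ts" "concat us = u"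
      "\<forall>i<length ts. set (us ! i) \<subseteq> J \<union> {ts ! i} \<and> ts ! i \<in> set (us ! i)" using PatS by blast
    show ?thesis
    proof (intro exI[of _ "us @ [e]"] conjI allI impI)
      show "length (us @ [e]) = length (ts @ [t])" using us by simp
      show "concat (us @ [e]) = u @ e" using us by simp
      fix i assume i: "i < length (ts @ [t])"
      show "set ((us @ [e]) ! i) \<subseteq> J \<union> {(ts @ [t]) ! i}" using i us PatS(2)
        by (cases "i < length ts") (auto simp: nth_append)
      show "(ts @ [t]) ! i \<in> set ((us @ [e]) ! i)" using i us PatS(3)
        by (cases "i < length ts") (auto simp: nth_append)
    qed
  qed
qed

lemma concat_len: "\<forall>x\<in>set us. x \<noteq> [] \<Longrightarrow> length us \<le> length (concat us)"
proof (induction us)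
  case (Cons x us)
  then have "length x \<ge> 1" by (simp add: Suc_le_eq)
  then show ?case using Cons by simp
qed simp

end

theorem mainTheorem8:
  fixes G :: "('a, 'b) monoid_scheme" and S :: "'a set" and ts :: "'a list" and w :: 'a
  assumes cox: "coxeter_system G S"
    and finS: "finite S"
    and tsS: "set ts \<subseteq> S"
    and inf: "\<And>i. 0 < i \<Longrightarrow> i < length ts \<Longrightarrow> coxeter_m G (ts ! (i - 1)) (ts ! i) = 0"
    and wprod: "\<exists>vs. length vs = length ts \<and>
          (\<forall>i < length ts. vs ! i \<in> parabolic G ((S - set ts) \<union> {ts ! i}) - parabolic G (S - set ts))
          \<and> w = word_prod G vs"
  shows "(\<forall>u. reduced_decomposition G S w u \<longrightarrow>
            (\<exists>us. length us = length ts \<and> concat us = u \<and>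
               (\<forall>i < length ts. word_prod G (us ! i) \<in>
                  parabolic G ((S - set ts) \<union> {ts ! i}) - parabolic G (S - set ts))))
         \<and> word_length G S w \<ge> length ts"
proof -
  have grp: "group G" using cox by (simp add: coxeter_system_def)
  have "cox G S" unfolding cox_def cox_axioms_def using grp cox finS by simp
  then interpret C: cox G S .
  define J where "J = S - set ts"
  have J: "J \<subseteq> S" and disj: "set ts \<inter> J = {}" unfolding J_def by auto
  obtain vs where vs: "length vs = length ts"
    "\<forall>i < length ts. vs ! i \<in> generate G (J \<union> {ts ! i}) - generate G J" "w = word_prod G vs"
    using wprod unfolding parabolic_def J_def by blast
  have cons: "C.consec ts" unfolding C.consec_def using inf by auto
  have Ps: "C.Psi J ts w" using C.Psi_from_vs[OF J tsS vs(1) vs(2)] vs(3) by simp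
  have wc: "w \<in> carrier G" using C.Psi_carrier[OF J Ps tsS] .
  have A: "\<forall>u. reduced_decomposition G S w u \<longrightarrow>
            (\<exists>us. length us = length ts \<and> concat us = u \<and>
               (\<forall>i < length ts. word_prod G (us ! i) \<in> generate G (J \<union> {ts ! i}) - generate G J))"
  proof (intro allI impI)
    fix u assume ru: "reduced_decomposition G S w u"
    have pat: "C.Pat J ts u" using C.main_ind[OF J tsS disj cons Ps ru] .
    show "\<exists>us. length us = length ts \<and> concat us = u \<and>
               (\<forall>i < length ts. word_prod G (us ! i) \<in> generate G (J \<union> {ts ! i}) - generate G J)"
    proof (cases "ts = []")
      case True
      then have "w = \<one>\<^bsub>G\<^esub>" using vs by simp
      then have "length u \<le> 0" using C.red_le[OF ru, of "[]"] by simp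
      then show ?thesis using True by simp
    next
      case False
      obtain us where us: "length us = length ts" "concat us = u"
        "\<forall>i<length ts. set (us ! i) \<subseteq> J \<union> {ts ! i} \<and> ts ! i \<in> set (us ! i)"
        using C.Pat_blocks[OF pat False] by blast
      show ?thesis
      proof (intro exI[of _ us] conjI allI impI)
        show "length us = length ts" "concat us = u" using us by auto
        fix i assume i: "i < length ts"
        have Ki: "J \<union> {ts ! i} \<subseteq> S" using J tsS i by auto
        have si: "set (us ! i) \<subseteq> J \<union> {ts ! i}" "ts ! i \<in> set (us ! i)" using us i by auto
        have tiJ: "ts ! i \<notin> J" using disj i by (metis disjoint_iff nth_mem)
        have "word_prod G (us ! i) \<in> generate G (J \<union> {ts ! i})"
          using C.generate_words[OF Ki] si by auto
        moreover have "word_prod G (us ! i) \<notin> generate G J"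
        proof
          assume g: "word_prod G (us ! i) \<in> generate G J"
          have "u = concat (take i us) @ us ! i @ concat (drop (Suc i) us)"
            using us i id_take_nth_drop[of i us] by (metis concat.simps(2) concat_append)
          then have "C.red (word_prod G (us ! i)) (us ! i)" using C.red_infix ru by metis
          then have "set (us ! i) \<subseteq> J" using C.P1[OF J _ g] by blast
          then show False using si tiJ by auto
        qed
        ultimately show "word_prod G (us ! i) \<in> generate G (J \<union> {ts ! i}) - generate G J" by simp
      qed
    qed
  qed
  have B: "word_length G S w \<ge> length ts"
  proof -
    obtain u where ru: "C.red w u" using C.red_ex wc by auto
    obtain us where us: "length us = length ts" "concat us = u"
      "\<forall>i < length ts. word_prod G (us ! i) \<in> generate G (J \<union> {ts ! i}) - generate G J"
      using A ru by blast
    have "\<forall>x\<in>set us. x \<noteq> []"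
    proof
      fix x assume "x \<in> set us"
      then obtain i where i: "i < length us" "x = us ! i" by (metis in_set_conv_nth)
      then have "word_prod G x \<notin> generate G J" using us by auto
      then show "x \<noteq> []" using generate.one[of G J] by auto
    qed
    then have "length us \<le> length (concat us)" by (rule C.concat_len)
    then have "length us \<le> length u" using us by simp
    then show ?thesis using us C.redD[OF ru] by simp
  qed
  show ?thesis using A B unfolding parabolic_def J_def by blast
qed

end
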